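(* Let $p_1,p_2\ge 0$ with $p_1+p_2\le 1$. For every $n\ge 1$, the expected value of the subtree number index of the random spiro chain $RSC(n,p_1,p_2)$ is \[ E(\mathrm{STN}(RSC(n,p_1,p_2)))=\frac{400}{(11+4p_1+p_2)^2}(12+4p_1+p_2)^{n}+\frac{140p_1+35p_2-15}{11+4p_1+p_2}\,n-\frac{400}{(11+4p_1+p_2)^2}+1. \]
   Context: For a graph $G$, $\mathrm{STN}(G)$ is the number of nonempty subtrees of $G$ (subgraphs that are trees, single vertices included). A spiro chain with $n$ hexagons consists of hexagons (6-cycles) $H_1,\dots,H_n$ such that $H_i$ and $H_{i+1}$ share exactly one vertex (a cut vertex) for $i=1,\dots,n-1$, non-consecutive hexagons are vertex-disjoint, and the graph is the union of these hexagons. For $2\le i\le n-1$, $H_i$ contains two distinct cut vertices (shared with $H_{i-1}$ and $H_{i+1}$); their distance in $H_i$ is $1$ (ortho), $2$ (meta) or $3$ (para). The random spiro chain $RSC(n,p_1,p_2)$ is built by stepwise addition of terminal hexagons: for $n\le 2$ the chain is unique, and at each step $i=3,\dots,n$, the new hexagon $H_i$ is attached at a vertex of $H_{i-1}$ which is at distance $1$ (ortho) from the cut vertex shared by $H_{i-1}$ and $H_{i-2}$ with probability $p_1$, at distance $2$ (meta) with probability $p_2$, and at distance $3$ (para) with probability $1-p_1-p_2$, independently at each step. *)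

theory Defs
  imports Complex_Main
begin

text \<open>A (finite simple) graph is given by a vertex set V and a set E of edges,
  each edge being a 2-element set of vertices.\<close>

definition adj_rel :: "'a set set \<Rightarrow> ('a \<times> 'a) set" where
  "adj_rel E = {(x, y). {x, y} \<in> E}"

definition connected_graph :: "'a set \<Rightarrow> 'a set set \<Rightarrow> bool" where
  "connected_graph V E \<longleftrightarrow> (\<forall>u\<in>V. \<forall>v\<in>V. (u, v) \<in> (adj_rel E)\<^sup>*)"

definition is_cycle :: "'a set set \<Rightarrow> 'a list \<Rightarrow> bool" where
  "is_cycle E vs \<longleftrightarrow> length vs \<ge> 3 \<and> distinct vs \<and>
     (\<forall>k < length vs. {vs ! k, vs ! ((k + 1) mod length vs)} \<in> E)"

definition acyclic_graph :: "'a set set \<Rightarrow> bool" where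
  "acyclic_graph E \<longleftrightarrow> \<not> (\<exists>vs. is_cycle E vs)"

definition is_tree :: "'a set \<Rightarrow> 'a set set \<Rightarrow> bool" where
  "is_tree V E \<longleftrightarrow> V \<noteq> {} \<and> connected_graph V E \<and> acyclic_graph E"

definition subtrees :: "'a set \<Rightarrow> 'a set set \<Rightarrow> ('a set \<times> 'a set set) set" where
  "subtrees V E = {(V', E'). V' \<subseteq> V \<and> E' \<subseteq> E \<and> (\<forall>e\<in>E'. e \<subseteq> V') \<and> is_tree V' E'}"

definition STN :: "'a set \<Rightarrow> 'a set set \<Rightarrow> nat" where
  "STN V E = card (subtrees V E)"

text \<open>Hexagon i (0-indexed, i < n) has positions 0..5 around the cycle. Position 0 of
  hexagon i (for i > 0) is the cut vertex shared with hexagon i-1; it is identified with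
  the exit position of hexagon i-1. The exit position of hexagon 0 is 1 (any choice gives
  an isomorphic graph); the exit position of hexagon k (1 \<le> k \<le> n-2) is cs!(k-1) \<in> {1,2,3},
  i.e. the distance (ortho = 1, meta = 2, para = 3) from its entry cut vertex.\<close>

definition spiro_exit :: "nat list \<Rightarrow> nat \<Rightarrow> nat" where
  "spiro_exit cs i = (if i = 0 then 1 else cs ! (i - 1))"

definition spiro_canon :: "nat list \<Rightarrow> nat \<times> nat \<Rightarrow> nat \<times> nat" where
  "spiro_canon cs v = (case v of (i, j) \<Rightarrow>
      if j = 0 \<and> i > 0 then (i - 1, spiro_exit cs (i - 1)) else (i, j))"

definition spiro_V :: "nat \<Rightarrow> nat list \<Rightarrow> (nat \<times> nat) set" where
  "spiro_V n cs = spiro_canon cs ` {(i, j). i < n \<and> j < 6}"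

definition spiro_E :: "nat \<Rightarrow> nat list \<Rightarrow> (nat \<times> nat) set set" where
  "spiro_E n cs = (\<lambda>(i, j). {spiro_canon cs (i, j), spiro_canon cs (i, (j + 1) mod 6)})
                    ` {(i, j). i < n \<and> j < 6}"

text \<open>Probability of an attachment choice: 1 = ortho, 2 = meta, 3 = para.\<close>
definition choice_prob :: "real \<Rightarrow> real \<Rightarrow> nat \<Rightarrow> real" where
  "choice_prob p1 p2 c = (if c = 1 then p1 else if c = 2 then p2 else 1 - p1 - p2)"

text \<open>Expected STN of RSC(n,p1,p2): the choices for steps 3..n are independent, so the
  distribution on choice lists of length n-2 is the product distribution.\<close>
definition expected_STN_RSC :: "nat \<Rightarrow> real \<Rightarrow> real \<Rightarrow> real" where
  "expected_STN_RSC n p1 p2 =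
     (\<Sum>cs \<in> {cs. length cs = n - 2 \<and> set cs \<subseteq> {1, 2, 3}}.
        (\<Prod>c\<leftarrow>cs. choice_prob p1 p2 c) * real (STN (spiro_V n cs) (spiro_E n cs)))"

end

theory Submission
  imports Defs
begin

lemma adj_rel_iff: "(x, y) \<in> adj_rel E \<longleftrightarrow> {x, y} \<in> E"
  by (simp add: adj_rel_def)

lemma adj_rel_sym: "(x, y) \<in> adj_rel E \<Longrightarrow> (y, x) \<in> adj_rel E"
  by (simp add: adj_rel_def insert_commute)

lemma adj_rel_conv: "(adj_rel E)\<inverse> = adj_rel E"
  by (auto simp: adj_rel_def insert_commute)

lemma rtrancl_adj_sym: "(x, y) \<in> (adj_rel E)\<^sup>* \<Longrightarrow> (y, x) \<in> (adj_rel E)\<^sup>*"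
  by (metis adj_rel_conv rtrancl_converseI)

lemma adj_rel_mono: "E \<subseteq> E' \<Longrightarrow> adj_rel E \<subseteq> adj_rel E'"
  by (auto simp: adj_rel_def)

lemma rtrancl_adj_mono: "(x, y) \<in> (adj_rel E)\<^sup>* \<Longrightarrow> E \<subseteq> E' \<Longrightarrow> (x, y) \<in> (adj_rel E')\<^sup>*"
  by (meson adj_rel_mono rtrancl_mono subsetD)

lemma is_cycle_mono: "is_cycle E vs \<Longrightarrow> E \<subseteq> E' \<Longrightarrow> is_cycle E' vs"
  unfolding is_cycle_def by blast

lemma acyclic_mono: "acyclic_graph E' \<Longrightarrow> E \<subseteq> E' \<Longrightarrow> acyclic_graph E"
  unfolding acyclic_graph_def using is_cycle_mono by blast

lemma subtrees_mono: "V \<subseteq> V' \<Longrightarrow> E \<subseteq> E' \<Longrightarrow> subtrees V E \<subseteq> subtrees V' E'"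
  unfolding subtrees_def by auto

lemma finite_subtrees: "finite V \<Longrightarrow> finite E \<Longrightarrow> finite (subtrees V E)"
proof -
  assume "finite V" "finite E"
  have "subtrees V E \<subseteq> Pow V \<times> Pow E" unfolding subtrees_def by auto
  then show ?thesis using \<open>finite V\<close> \<open>finite E\<close> finite_subset by blast
qed

definition cnt :: "'a set \<Rightarrow> 'a set set \<Rightarrow> ('a set \<Rightarrow> bool) \<Rightarrow> nat" where
  "cnt V E P = card {T \<in> subtrees V E. P (fst T)}"

lemma STN_cnt: "STN V E = cnt V E (\<lambda>_. True)"
  by (simp add: STN_def cnt_def)

lemma cnt_split: "finite V \<Longrightarrow> finite E \<Longrightarrow>
   cnt V E P = cnt V E (\<lambda>A. Q A \<and> P A) + cnt V E (\<lambda>A. \<not> Q A \<and> P A)"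
proof -
  assume f: "finite V" "finite E"
  have "{T \<in> subtrees V E. P (fst T)} = {T \<in> subtrees V E. Q (fst T) \<and> P (fst T)} \<union> {T \<in> subtrees V E. \<not> Q (fst T) \<and> P (fst T)}"
    by auto
  moreover have "finite {T \<in> subtrees V E. Q (fst T) \<and> P (fst T)}" "finite {T \<in> subtrees V E. \<not> Q (fst T) \<and> P (fst T)}"
    using finite_subtrees[OF f] by auto
  ultimately show ?thesis unfolding cnt_def
    by (simp add: card_Un_disjoint disjoint_iff)
qed

section \<open>Gluing at a cut vertex\<close>

definition two_edges :: "'a set set \<Rightarrow> bool" where
  "two_edges E \<longleftrightarrow> (\<forall>e\<in>E. \<exists>a b. a \<noteq> b \<and> e = {a, b})"

lemma two_edgesD: "two_edges E \<Longrightarrow> e \<in> E \<Longrightarrow> \<exists>a b. a \<noteq> b \<and> e = {a, b}"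
  unfolding two_edges_def by (rule bspec)

lemma two_edges_mono: "two_edges E \<Longrightarrow> B \<subseteq> E \<Longrightarrow> two_edges B"
  unfolding two_edges_def by (meson subsetD)

lemma restrict_reach:
  assumes int: "V1 \<inter> V2 = {v}" and e1: "\<forall>e\<in>E1. e \<subseteq> V1" and e2: "\<forall>e\<in>E2. e \<subseteq> V2"
    and B: "B \<subseteq> E1 \<union> E2" and u: "u \<in> V1"
    and r: "(u, x) \<in> (adj_rel B)\<^sup>*"
  shows "(x \<in> V1 \<and> (u, x) \<in> (adj_rel (B \<inter> E1))\<^sup>*) \<or> (u, v) \<in> (adj_rel (B \<inter> E1))\<^sup>*"
  using r
proof (induction rule: rtrancl_induct)
  case base
  then show ?case using u by simp
next
  case (step y z)
  from step.hyps(2) have yz: "{y, z} \<in> B" by (simp add: adj_rel_iff)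
  show ?case
  proof (cases "(u, v) \<in> (adj_rel (B \<inter> E1))\<^sup>*")
    case True then show ?thesis by simp
  next
    case False
    with step.IH have y: "y \<in> V1" "(u, y) \<in> (adj_rel (B \<inter> E1))\<^sup>*" by auto
    show ?thesis
    proof (cases "{y, z} \<in> E1")
      case True
      then have "z \<in> V1" using e1 by auto
      moreover have "(y, z) \<in> adj_rel (B \<inter> E1)" using True yz by (simp add: adj_rel_iff)
      ultimately show ?thesis using y by (meson rtrancl.rtrancl_into_rtrancl)
    next
      case False
      then have "{y, z} \<in> E2" using yz B by auto
      then have "y \<in> V2" using e2 by auto
      then have "y = v" using y int by auto
      then show ?thesis using y by simp
    qed
  qed
qed

lemma restrict_subtree:
  assumes int: "V1 \<inter> V2 = {v}" and e1: "\<forall>e\<in>E1. e \<subseteq> V1" and e2: "\<forall>e\<in>E2. e \<subseteq> V2"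
    and T: "(A, B) \<in> subtrees (V1 \<union> V2) (E1 \<union> E2)" and vA: "v \<in> A"
  shows "(A \<inter> V1, B \<inter> E1) \<in> subtrees V1 E1"
proof -
  from T have AV: "A \<subseteq> V1 \<union> V2" and BE: "B \<subseteq> E1 \<union> E2" and eA: "\<forall>e\<in>B. e \<subseteq> A"
    and tr: "is_tree A B" unfolding subtrees_def by auto
  from tr have conn: "connected_graph A B" and ac: "acyclic_graph B" unfolding is_tree_def by auto
  have vV1: "v \<in> V1" using int by auto
  have tov: "(u, v) \<in> (adj_rel (B \<inter> E1))\<^sup>*" if "u \<in> A \<inter> V1" for u
  proof -
    have "(u, v) \<in> (adj_rel B)\<^sup>*" using conn that vA unfolding connected_graph_def by auto
    from restrict_reach[OF int e1 e2 BE _ this] that show ?thesis by auto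
  qed
  have "connected_graph (A \<inter> V1) (B \<inter> E1)"
    unfolding connected_graph_def
  proof (intro ballI)
    fix u w assume u: "u \<in> A \<inter> V1" and w: "w \<in> A \<inter> V1"
    show "(u, w) \<in> (adj_rel (B \<inter> E1))\<^sup>*" by (rule rtrancl_trans[OF tov[OF u] rtrancl_adj_sym[OF tov[OF w]]])
  qed
  moreover have "acyclic_graph (B \<inter> E1)" using ac acyclic_mono by blast
  moreover have "A \<inter> V1 \<noteq> {}" using vA vV1 by auto
  ultimately have "is_tree (A \<inter> V1) (B \<inter> E1)" unfolding is_tree_def by auto
  then show ?thesis unfolding subtrees_def using eA e1 by auto
qed

lemma cyclic_transition:
  fixes P :: "nat \<Rightarrow> bool"
  assumes "i < L" "j < L" "P i" "\<not> P j"
  shows "\<exists>k<L. P k \<and> \<not> P ((k + 1) mod L)"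
proof (rule ccontr)
  assume "\<not> ?thesis"
  then have st: "\<And>k. k < L \<Longrightarrow> P k \<Longrightarrow> P ((k + 1) mod L)" by auto
  have "P ((i + m) mod L)" for m
  proof (induction m)
    case 0 then show ?case using assms by simp
  next
    case (Suc m)
    have "(i + m) mod L < L" using assms by simp
    from st[OF this Suc] show ?case by (simp add: mod_Suc_eq)
  qed
  from this[of "j + L - i"] have "P ((j + L) mod L)" using assms by simp
  then show False using assms by simp
qed

lemma cycle_edge: "is_cycle E vs \<Longrightarrow> k < length vs \<Longrightarrow> {vs ! k, vs ! ((k + 1) mod length vs)} \<in> E"
  unfolding is_cycle_def by auto

lemma suc_mod_inj:
  fixes k k' L :: nat
  assumes "k < L" "k' < L" "(k + 1) mod L = (k' + 1) mod L" shows "k = k'"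
proof -
  have a: "(k + 1) mod L = (if k + 1 = L then 0 else k + 1)" using assms(1) by auto
  have b: "(k' + 1) mod L = (if k' + 1 = L then 0 else k' + 1)" using assms(2) by auto
  show ?thesis using a b assms by (auto split: if_splits)
qed

lemma union_acyclic:
  assumes int: "V1 \<inter> V2 = {v}" and te: "two_edges (B1 \<union> B2)"
    and b1: "\<forall>e\<in>B1. e \<subseteq> V1" and b2: "\<forall>e\<in>B2. e \<subseteq> V2"
    and a1: "acyclic_graph B1" and a2: "acyclic_graph B2"
  shows "acyclic_graph (B1 \<union> B2)"
  unfolding acyclic_graph_def
proof
  assume "\<exists>vs. is_cycle (B1 \<union> B2) vs"
  then obtain vs where cy: "is_cycle (B1 \<union> B2) vs" by blast
  define L where "L = length vs"
  have L3: "L \<ge> 3" and dist: "distinct vs" using cy unfolding is_cycle_def L_def by auto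
  define P where "P k \<longleftrightarrow> {vs ! k, vs ! ((k + 1) mod L)} \<in> B1" for k
  have edge: "{vs ! k, vs ! ((k + 1) mod L)} \<in> B1 \<union> B2" if "k < L" for k
    using cycle_edge[OF cy] that L_def by auto
  have notboth: "\<not> (e \<in> B1 \<and> e \<in> B2)" if eB: "e \<in> B1 \<union> B2" for e
  proof
    assume "e \<in> B1 \<and> e \<in> B2"
    then have "e \<subseteq> {v}" using b1 b2 int by blast
    moreover obtain a b where "a \<noteq> b" "e = {a, b}" using two_edgesD[OF te eB] by blast
    ultimately show False by auto
  qed
  have ex1: "\<exists>i<L. P i"
  proof (rule ccontr)
    assume "\<not> ?thesis"
    then have "\<forall>k<L. {vs ! k, vs ! ((k + 1) mod L)} \<in> B2" using edge P_def by auto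
    then have "is_cycle B2 vs" using cy unfolding is_cycle_def L_def by auto
    then show False using a2 unfolding acyclic_graph_def by auto
  qed
  have ex2: "\<exists>j<L. \<not> P j"
  proof (rule ccontr)
    assume "\<not> ?thesis"
    then have "\<forall>k<L. {vs ! k, vs ! ((k + 1) mod L)} \<in> B1" using P_def by auto
    then have "is_cycle B1 vs" using cy unfolding is_cycle_def L_def by auto
    then show False using a1 unfolding acyclic_graph_def by auto
  qed
  from ex1 ex2 obtain i j where ij: "i < L" "j < L" "P i" "\<not> P j" by blast
  obtain k where k: "k < L" "P k" "\<not> P ((k + 1) mod L)" using cyclic_transition[OF ij] by blast
  obtain k' where k': "k' < L" "\<not> P k'" "P ((k' + 1) mod L)"
    using cyclic_transition[of j L i "\<lambda>x. \<not> P x"] ij by auto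
  have L0: "L > 0" using L3 by simp
  have vk: "vs ! ((k + 1) mod L) = v" if "k < L" "P k" "\<not> P ((k + 1) mod L)" for k
  proof -
    let ?m = "(k + 1) mod L"
    have m: "?m < L" using L0 by simp
    have "{vs ! k, vs ! ?m} \<in> B1" using that P_def by simp
    then have x1: "vs ! ?m \<in> V1" using b1 by auto
    have "{vs ! ?m, vs ! ((?m + 1) mod L)} \<in> B2" using that edge[OF m] P_def by auto
    then have x2: "vs ! ?m \<in> V2" using b2 by auto
    from x1 x2 int show ?thesis by auto
  qed
  have vk': "vs ! ((k' + 1) mod L) = v"
  proof -
    let ?m = "(k' + 1) mod L"
    have m: "?m < L" using L0 by simp
    have "{vs ! k', vs ! ?m} \<in> B2" using k' edge P_def by auto
    then have x2: "vs ! ?m \<in> V2" using b2 by auto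
    have "{vs ! ?m, vs ! ((?m + 1) mod L)} \<in> B1" using k' P_def by auto
    then have x1: "vs ! ?m \<in> V1" using b1 by auto
    from x1 x2 int show ?thesis by auto
  qed
  have "vs ! ((k + 1) mod L) = vs ! ((k' + 1) mod L)" using vk[OF k] vk' by simp
  moreover have "(k + 1) mod L < length vs" "(k' + 1) mod L < length vs" using L0 L_def by auto
  ultimately have "(k + 1) mod L = (k' + 1) mod L" using nth_eq_iff_index_eq[OF dist] by blast
  then have "k = k'" using k k' suc_mod_inj by blast
  then show False using k k' by simp
qed

lemma union_subtree:
  assumes int: "V1 \<inter> V2 = {v}" and e1: "\<forall>e\<in>E1. e \<subseteq> V1" and e2: "\<forall>e\<in>E2. e \<subseteq> V2"
    and te: "two_edges (E1 \<union> E2)"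
    and T1: "(A1, B1) \<in> subtrees V1 E1" and T2: "(A2, B2) \<in> subtrees V2 E2"
    and v1: "v \<in> A1" and v2: "v \<in> A2"
  shows "(A1 \<union> A2, B1 \<union> B2) \<in> subtrees (V1 \<union> V2) (E1 \<union> E2)"
proof -
  from T1 have A1: "A1 \<subseteq> V1" "B1 \<subseteq> E1" "\<forall>e\<in>B1. e \<subseteq> A1" "is_tree A1 B1" unfolding subtrees_def by auto
  from T2 have A2: "A2 \<subseteq> V2" "B2 \<subseteq> E2" "\<forall>e\<in>B2. e \<subseteq> A2" "is_tree A2 B2" unfolding subtrees_def by auto
  have tov: "(u, v) \<in> (adj_rel (B1 \<union> B2))\<^sup>*" if "u \<in> A1 \<union> A2" for u
  proof (cases "u \<in> A1")
    case True
    then have "(u, v) \<in> (adj_rel B1)\<^sup>*" using A1(4) v1 unfolding is_tree_def connected_graph_def by auto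
    then show ?thesis by (rule rtrancl_adj_mono) auto
  next
    case False
    then have "u \<in> A2" using that by auto
    then have "(u, v) \<in> (adj_rel B2)\<^sup>*" using A2(4) v2 unfolding is_tree_def connected_graph_def by auto
    then show ?thesis by (rule rtrancl_adj_mono) auto
  qed
  have conn: "connected_graph (A1 \<union> A2) (B1 \<union> B2)"
    unfolding connected_graph_def
  proof (intro ballI)
    fix u w assume u: "u \<in> A1 \<union> A2" and w: "w \<in> A1 \<union> A2"
    show "(u, w) \<in> (adj_rel (B1 \<union> B2))\<^sup>*" by (rule rtrancl_trans[OF tov[OF u] rtrancl_adj_sym[OF tov[OF w]]])
  qed
  have te': "two_edges (B1 \<union> B2)" by (rule two_edges_mono[OF te]) (use A1(2) A2(2) in blast)
  have ac: "acyclic_graph (B1 \<union> B2)"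
    by (rule union_acyclic[OF int te']) (use A1 A2 e1 e2 in \<open>auto simp: is_tree_def\<close>)
  show ?thesis unfolding subtrees_def is_tree_def using A1 A2 conn ac v1 by auto
qed

lemma nov_side:
  assumes int: "V1 \<inter> V2 = {v}" and e1: "\<forall>e\<in>E1. e \<subseteq> V1" and e2: "\<forall>e\<in>E2. e \<subseteq> V2"
    and te: "two_edges (E1 \<union> E2)"
    and T: "(A, B) \<in> subtrees (V1 \<union> V2) (E1 \<union> E2)" and vA: "v \<notin> A"
    and u: "u \<in> A" "u \<in> V1"
  shows "(A, B) \<in> subtrees V1 E1"
proof -
  from T have AV: "A \<subseteq> V1 \<union> V2" and BE: "B \<subseteq> E1 \<union> E2" and eA: "\<forall>e\<in>B. e \<subseteq> A"
    and tr: "is_tree A B" unfolding subtrees_def by auto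
  from tr have conn: "connected_graph A B" unfolding is_tree_def by auto
  have reach: "x \<in> V1" if "(u, x) \<in> (adj_rel B)\<^sup>*" for x
    using that
  proof (induction rule: rtrancl_induct)
    case base then show ?case using u by simp
  next
    case (step y z)
    then have yz: "{y, z} \<in> B" by (simp add: adj_rel_iff)
    then have yA: "y \<in> A" using eA by auto
    show ?case
    proof (cases "{y, z} \<in> E1")
      case True then show ?thesis using e1 by auto
    next
      case False
      then have "{y, z} \<in> E2" using yz BE by auto
      then have "y \<in> V2" using e2 by auto
      then have "y = v" using step.IH int by auto
      then show ?thesis using yA vA by simp
    qed
  qed
  have AV1: "A \<subseteq> V1"
  proof
    fix x assume "x \<in> A"
    then have "(u, x) \<in> (adj_rel B)\<^sup>*" using conn u unfolding connected_graph_def by auto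
    then show "x \<in> V1" using reach by simp
  qed
  have BE1: "B \<subseteq> E1"
  proof
    fix e assume eB: "e \<in> B"
    show "e \<in> E1"
    proof (rule ccontr)
      assume "e \<notin> E1"
      then have "e \<in> E2" using eB BE by auto
      then have "e \<subseteq> V2" using e2 by auto
      moreover have "e \<subseteq> A" using eA eB by auto
      ultimately have "e \<subseteq> V1 \<inter> V2" "e \<subseteq> A" using AV1 by auto
      then have "e \<subseteq> {v}" "e \<subseteq> A" using int by auto
      then have e0: "e = {}" using vA by auto
      have "e \<in> E1 \<union> E2" using \<open>e \<in> E2\<close> by simp
      then obtain a b where "e = {a, b}" using two_edgesD[OF te] by blast
      then show False using e0 by simp
    qed
  qed
  show ?thesis using AV1 BE1 eA tr unfolding subtrees_def by auto
qed

lemma glue_count: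
  assumes int: "V1 \<inter> V2 = {v}" and e1: "\<forall>e\<in>E1. e \<subseteq> V1" and e2: "\<forall>e\<in>E2. e \<subseteq> V2"
    and te: "two_edges (E1 \<union> E2)"
    and fin: "finite V1" "finite V2" "finite E1" "finite E2"
    and PU: "\<And>A1 A2. A1 \<subseteq> V1 \<Longrightarrow> A2 \<subseteq> V2 \<Longrightarrow> v \<in> A2 \<Longrightarrow> P (A1 \<union> A2) = P A2"
  shows "cnt (V1 \<union> V2) (E1 \<union> E2) P =
           cnt V1 E1 (\<lambda>A. v \<notin> A \<and> P A) + cnt V2 E2 (\<lambda>A. v \<notin> A \<and> P A)
           + cnt V1 E1 (\<lambda>A. v \<in> A) * cnt V2 E2 (\<lambda>A. v \<in> A \<and> P A)"
proof -
  let ?S = "subtrees (V1 \<union> V2) (E1 \<union> E2)"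
  let ?S1 = "subtrees V1 E1" and ?S2 = "subtrees V2 E2"
  have int': "V2 \<inter> V1 = {v}" using int by auto
  have te': "two_edges (E2 \<union> E1)" using te by (simp add: Un_commute)
  have swap: "T \<in> ?S \<longleftrightarrow> T \<in> subtrees (V2 \<union> V1) (E2 \<union> E1)" for T by (simp add: Un_commute)
  have finS: "finite ?S" "finite ?S1" "finite ?S2" using fin by (simp_all add: finite_subtrees)
  define X1 where "X1 = {T \<in> ?S1. v \<notin> fst T \<and> P (fst T)}"
  define X2 where "X2 = {T \<in> ?S2. v \<notin> fst T \<and> P (fst T)}"
  define Y where "Y = {T \<in> ?S. v \<in> fst T \<and> P (fst T)}"
  define Y1 where "Y1 = {T \<in> ?S1. v \<in> fst T}"
  define Y2 where "Y2 = {T \<in> ?S2. v \<in> fst T \<and> P (fst T)}"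
  have S1S: "?S1 \<subseteq> ?S" "?S2 \<subseteq> ?S" by (intro subtrees_mono; auto)+
  have nonempty: "fst T \<noteq> {}" if "T \<in> subtrees V E" for T V E
    using that unfolding subtrees_def is_tree_def by auto
  have decomp: "{T \<in> ?S. P (fst T)} = X1 \<union> X2 \<union> Y"
  proof (intro equalityI subsetI)
    fix T assume "T \<in> {T \<in> ?S. P (fst T)}"
    then obtain A B where T: "T = (A, B)" "(A, B) \<in> ?S" "P A" by (cases T) auto
    show "T \<in> X1 \<union> X2 \<union> Y"
    proof (cases "v \<in> A")
      case True then show ?thesis using T Y_def by auto
    next
      case False
      obtain u where u: "u \<in> A" using nonempty[OF T(2)] by auto
      have "A \<subseteq> V1 \<union> V2" using T(2) unfolding subtrees_def by auto
      then have "u \<in> V1 \<or> u \<in> V2" using u by auto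
      then show ?thesis
      proof
        assume "u \<in> V1"
        from nov_side[OF int e1 e2 te T(2) False u this] show ?thesis using T False X1_def by auto
      next
        assume "u \<in> V2"
        from nov_side[OF int' e2 e1 te' T(2)[unfolded swap] False u this] show ?thesis using T False X2_def by auto
      qed
    qed
  next
    fix T assume "T \<in> X1 \<union> X2 \<union> Y"
    then show "T \<in> {T \<in> ?S. P (fst T)}" using S1S X1_def X2_def Y_def by auto
  qed
  have d12: "X1 \<inter> X2 = {}"
  proof (rule ccontr)
    assume "X1 \<inter> X2 \<noteq> {}"
    then obtain T where T: "T \<in> X1" "T \<in> X2" by auto
    then have "fst T \<subseteq> V1" "fst T \<subseteq> V2" "v \<notin> fst T" "fst T \<noteq> {}"
      using X1_def X2_def nonempty unfolding subtrees_def by auto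
    then show False using int by auto
  qed
  have dY: "(X1 \<union> X2) \<inter> Y = {}" using X1_def X2_def Y_def by auto
  have finX: "finite X1" "finite X2" "finite Y" using finS X1_def X2_def Y_def by auto
  have c1: "card {T \<in> ?S. P (fst T)} = card X1 + card X2 + card Y"
    unfolding decomp using finX d12 dY by (simp add: card_Un_disjoint)
  define f where "f = (\<lambda>(T1 :: 'a set \<times> 'a set set, T2 :: 'a set \<times> 'a set set). (fst T1 \<union> fst T2, snd T1 \<union> snd T2))"
  have E12: "E1 \<inter> E2 = {}"
  proof (rule ccontr)
    assume "E1 \<inter> E2 \<noteq> {}"
    then obtain e where e: "e \<in> E1" "e \<in> E2" by auto
    then have "e \<subseteq> {v}" using e1 e2 int by blast
    moreover have "e \<in> E1 \<union> E2" using e by simp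
    then obtain a b where "a \<noteq> b" "e = {a, b}" using two_edgesD[OF te] by blast
    ultimately show False by auto
  qed
  have Yimg: "Y = f ` (Y1 \<times> Y2)"
  proof (intro equalityI subsetI)
    fix T assume "T \<in> Y"
    then obtain A B where T: "T = (A, B)" "(A, B) \<in> ?S" "v \<in> A" "P A" using Y_def by (cases T) auto
    have AB: "A \<subseteq> V1 \<union> V2" "B \<subseteq> E1 \<union> E2" using T(2) unfolding subtrees_def by auto
    have t1: "(A \<inter> V1, B \<inter> E1) \<in> ?S1" by (rule restrict_subtree[OF int e1 e2 T(2) T(3)])
    have t2: "(A \<inter> V2, B \<inter> E2) \<in> ?S2" by (rule restrict_subtree[OF int' e2 e1 T(2)[unfolded swap] T(3)])
    have Aeq: "A = (A \<inter> V1) \<union> (A \<inter> V2)" using AB by auto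
    have "P A = P (A \<inter> V2)" by (subst Aeq, rule PU) (use T(3) int in auto)
    then have "(A \<inter> V1, B \<inter> E1) \<in> Y1" "(A \<inter> V2, B \<inter> E2) \<in> Y2" using t1 t2 T Y1_def Y2_def int by auto
    moreover have "T = f ((A \<inter> V1, B \<inter> E1), (A \<inter> V2, B \<inter> E2))" using T AB unfolding f_def by auto
    ultimately show "T \<in> f ` (Y1 \<times> Y2)" by blast
  next
    fix T assume "T \<in> f ` (Y1 \<times> Y2)"
    then obtain A1 B1 A2 B2 where T: "T = (A1 \<union> A2, B1 \<union> B2)" "(A1, B1) \<in> Y1" "(A2, B2) \<in> Y2"
      unfolding f_def by auto
    then have t: "(A1, B1) \<in> ?S1" "(A2, B2) \<in> ?S2" "v \<in> A1" "v \<in> A2" "P A2" using Y1_def Y2_def by auto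
    have "A1 \<subseteq> V1" "A2 \<subseteq> V2" using t unfolding subtrees_def by auto
    then have "P (A1 \<union> A2)" using PU t by simp
    then show "T \<in> Y" using union_subtree[OF int e1 e2 te t(1) t(2) t(3) t(4)] T t Y_def by auto
  qed
  have inj: "inj_on f (Y1 \<times> Y2)"
  proof (rule inj_onI)
    fix x y assume x: "x \<in> Y1 \<times> Y2" and y: "y \<in> Y1 \<times> Y2" and fxy: "f x = f y"
    obtain A1 B1 A2 B2 where xx: "x = ((A1, B1), (A2, B2))" by (cases x) auto
    obtain A1' B1' A2' B2' where yy: "y = ((A1', B1'), (A2', B2'))" by (cases y) auto
    have s: "A1 \<subseteq> V1" "B1 \<subseteq> E1" "A2 \<subseteq> V2" "B2 \<subseteq> E2" "v \<in> A1" "v \<in> A2"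
      "A1' \<subseteq> V1" "B1' \<subseteq> E1" "A2' \<subseteq> V2" "B2' \<subseteq> E2" "v \<in> A1'" "v \<in> A2'"
      using x y xx yy Y1_def Y2_def unfolding subtrees_def by auto
    have eq: "A1 \<union> A2 = A1' \<union> A2'" "B1 \<union> B2 = B1' \<union> B2'" using fxy xx yy f_def by auto
    have "A1 = (A1 \<union> A2) \<inter> V1" using s int by auto
    moreover have "A1' = (A1' \<union> A2') \<inter> V1" using s int by auto
    moreover have "A2 = (A1 \<union> A2) \<inter> V2" using s int by auto
    moreover have "A2' = (A1' \<union> A2') \<inter> V2" using s int by auto
    moreover have "B1 = (B1 \<union> B2) \<inter> E1" using s E12 by auto
    moreover have "B1' = (B1' \<union> B2') \<inter> E1" using s E12 by auto
    moreover have "B2 = (B1 \<union> B2) \<inter> E2" using s E12 by auto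
    moreover have "B2' = (B1' \<union> B2') \<inter> E2" using s E12 by auto
    ultimately show "x = y" using xx yy eq by metis
  qed
  have finY: "finite Y1" "finite Y2" using finS Y1_def Y2_def by auto
  have cY: "card Y = card Y1 * card Y2"
    unfolding Yimg using card_image[OF inj] card_cartesian_product by simp
  show ?thesis unfolding cnt_def using c1 cY X1_def X2_def Y1_def Y2_def by simp
qed

lemma rtrancl_map_adj:
  assumes "(x, y) \<in> (adj_rel B)\<^sup>*"
  shows "(f x, f y) \<in> (adj_rel ((`) f ` B))\<^sup>*"
  using assms
proof (induction rule: rtrancl_induct)
  case base then show ?case by simp
next
  case (step y z)
  then have "{y, z} \<in> B" by (simp add: adj_rel_iff)
  then have "f ` {y, z} \<in> (`) f ` B" by blast
  then have "(f y, f z) \<in> adj_rel ((`) f ` B)" by (simp add: adj_rel_iff)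
  with step.IH show ?case by (rule rtrancl_into_rtrancl)
qed

lemma tree_map:
  assumes inj: "inj_on f A" and eA: "\<forall>e\<in>B. e \<subseteq> A" and tr: "is_tree A B"
  shows "is_tree (f ` A) ((`) f ` B)"
proof -
  have ne: "f ` A \<noteq> {}" using tr unfolding is_tree_def by auto
  have conn: "connected_graph (f ` A) ((`) f ` B)"
    unfolding connected_graph_def
  proof (intro ballI)
    fix x y assume "x \<in> f ` A" "y \<in> f ` A"
    then obtain u w where uw: "u \<in> A" "w \<in> A" "x = f u" "y = f w" by auto
    then have "(u, w) \<in> (adj_rel B)\<^sup>*" using tr unfolding is_tree_def connected_graph_def by auto
    then show "(x, y) \<in> (adj_rel ((`) f ` B))\<^sup>*" using uw rtrancl_map_adj by metis
  qed
  have ac: "acyclic_graph ((`) f ` B)"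
    unfolding acyclic_graph_def
  proof
    assume "\<exists>vs. is_cycle ((`) f ` B) vs"
    then obtain vs where cy: "is_cycle ((`) f ` B) vs" by blast
    define g where "g = inv_into A f"
    define L where "L = length vs"
    have L3: "L \<ge> 3" and dist: "distinct vs" using cy unfolding is_cycle_def L_def by auto
    have ed: "{vs ! k, vs ! ((k + 1) mod L)} \<in> (`) f ` B" if "k < L" for k
      using cycle_edge[OF cy] that L_def by simp
    have inA: "vs ! k \<in> f ` A" if kk: "k < L" for k
    proof -
      obtain e where e: "e \<in> B" "{vs ! k, vs ! ((k + 1) mod L)} = f ` e" using ed[OF kk] by blast
      then have "vs ! k \<in> f ` e" by blast
      then show ?thesis using eA e(1) by blast
    qed
    have setA: "set vs \<subseteq> f ` A"
    proof
      fix x assume "x \<in> set vs"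
      then obtain k where "k < L" "x = vs ! k" unfolding L_def by (metis in_set_conv_nth)
      then show "x \<in> f ` A" using inA by simp
    qed
    have injg: "inj_on g (f ` A)" unfolding g_def by (rule inj_on_inv_into) simp
    have "is_cycle B (map g vs)"
      unfolding is_cycle_def
    proof (intro conjI allI impI)
      show "3 \<le> length (map g vs)" using L3 L_def by simp
      show "distinct (map g vs)" using dist injg setA by (simp add: distinct_map inj_on_subset)
      fix k assume k: "k < length (map g vs)"
      then have kL: "k < L" using L_def by simp
      obtain e where e: "e \<in> B" "{vs ! k, vs ! ((k + 1) mod L)} = f ` e" using ed[OF kL] by blast
      have "g ` f ` e = e" unfolding g_def using inv_into_image_cancel[OF inj] eA e(1) by blast
      then have "g ` {vs ! k, vs ! ((k + 1) mod L)} = e" using e by simp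
      moreover have "(k + 1) mod L < L" using kL by simp
      ultimately have "{map g vs ! k, map g vs ! ((k + 1) mod L)} = e" using kL L_def by simp
      then show "{map g vs ! k, map g vs ! ((k + 1) mod length (map g vs))} \<in> B" using e L_def by simp
    qed
    then show False using tr unfolding is_tree_def acyclic_graph_def by blast
  qed
  show ?thesis unfolding is_tree_def using ne conn ac by simp
qed

lemma subtrees_image:
  assumes inj: "inj_on f V" and eV: "\<forall>e\<in>E. e \<subseteq> V"
  shows "subtrees (f ` V) ((`) f ` E) = (\<lambda>(A, B). (f ` A, (`) f ` B)) ` subtrees V E"
proof (intro equalityI subsetI)
  fix T assume "T \<in> (\<lambda>(A, B). (f ` A, (`) f ` B)) ` subtrees V E"
  then obtain A B where T: "T = (f ` A, (`) f ` B)" "(A, B) \<in> subtrees V E" by auto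
  then have s: "A \<subseteq> V" "B \<subseteq> E" "\<forall>e\<in>B. e \<subseteq> A" "is_tree A B" unfolding subtrees_def by auto
  have "inj_on f A" using inj s(1) inj_on_subset by blast
  have im: "\<forall>e'\<in>(`) f ` B. e' \<subseteq> f ` A" using s(3) by blast
  from tree_map[OF \<open>inj_on f A\<close> s(3) s(4)] s im show "T \<in> subtrees (f ` V) ((`) f ` E)"
    unfolding T(1) subtrees_def by auto
next
  fix T assume T0: "T \<in> subtrees (f ` V) ((`) f ` E)"
  then obtain A' B' where T: "T = (A', B')" by (cases T) auto
  from T0 T have s: "A' \<subseteq> f ` V" "B' \<subseteq> (`) f ` E" "\<forall>e\<in>B'. e \<subseteq> A'" "is_tree A' B'"
    unfolding subtrees_def by auto
  define g where "g = inv_into V f"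
  have gA: "g ` A' \<subseteq> V" unfolding g_def using s(1) by (auto intro: inv_into_into)
  have fgA: "f ` g ` A' = A'" unfolding g_def using s(1) by (simp add: image_inv_into_cancel)
  have fge: "f ` g ` e = e" if "e \<in> B'" for e
    unfolding g_def using s(1) s(3) that by (meson image_inv_into_cancel order_trans)
  have gfe: "g ` f ` e = e" if "e \<in> E" for e
    unfolding g_def using inv_into_image_cancel[OF inj] eV that by blast
  have gB: "(`) g ` B' \<subseteq> E"
  proof
    fix x assume "x \<in> (`) g ` B'"
    then obtain e' where e': "e' \<in> B'" "x = g ` e'" by auto
    then obtain e where e: "e \<in> E" "e' = f ` e" using s(2) by auto
    then show "x \<in> E" using e' gfe by simp
  qed
  have fgB: "(`) f ` (`) g ` B' = B'"
  proof -
    have "(`) f ` (`) g ` B' = (\<lambda>e. f ` g ` e) ` B'" by (simp add: image_image)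
    also have "\<dots> = B'" using fge by simp
    finally show ?thesis .
  qed
  have injg: "inj_on g A'" unfolding g_def using s(1) inj_on_inv_into by blast
  have eg: "\<forall>e\<in>B'. e \<subseteq> A'" using s(3) by simp
  have trg: "is_tree (g ` A') ((`) g ` B')" by (rule tree_map[OF injg eg s(4)])
  have im: "\<forall>e'\<in>(`) g ` B'. e' \<subseteq> g ` A'" using s(3) by blast
  have "(g ` A', (`) g ` B') \<in> subtrees V E"
    unfolding subtrees_def using gA gB trg im by auto
  moreover have "T = (f ` g ` A', (`) f ` (`) g ` B')" using T fgA fgB by simp
  ultimately show "T \<in> (\<lambda>(A, B). (f ` A, (`) f ` B)) ` subtrees V E" by force
qed

lemma cnt_image:
  assumes inj: "inj_on f V" and eV: "\<forall>e\<in>E. e \<subseteq> V"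
  shows "cnt (f ` V) ((`) f ` E) P = cnt V E (\<lambda>A. P (f ` A))"
proof -
  define h where "h = (\<lambda>(A :: 'a set, B :: 'a set set). (f ` A, (`) f ` B))"
  have eq: "{T \<in> subtrees (f ` V) ((`) f ` E). P (fst T)} = h ` {T \<in> subtrees V E. P (f ` fst T)}"
    unfolding subtrees_image[OF inj eV] h_def by force
  have "inj_on h (subtrees V E)"
  proof (rule inj_onI)
    fix x y assume x: "x \<in> subtrees V E" and y: "y \<in> subtrees V E" and hxy: "h x = h y"
    obtain A B where xx: "x = (A, B)" by (cases x) auto
    obtain A' B' where yy: "y = (A', B')" by (cases y) auto
    have s: "A \<subseteq> V" "A' \<subseteq> V" "B \<subseteq> E" "B' \<subseteq> E" using x y xx yy unfolding subtrees_def by auto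
    have e: "f ` A = f ` A'" "(`) f ` B = (`) f ` B'" using hxy xx yy h_def by auto
    have "A = A'" using e(1) s inj by (meson inj_on_image_eq_iff)
    moreover have "inj_on ((`) f) E"
      using inj eV by (meson PowI inj_on_image_Pow inj_on_subset subsetI)
    then have "B = B'" using e(2) s by (meson inj_on_image_eq_iff)
    ultimately show "x = y" using xx yy by simp
  qed
  then have "inj_on h {T \<in> subtrees V E. P (f ` fst T)}" by (rule inj_on_subset) auto
  then show ?thesis unfolding cnt_def eq by (simp add: card_image)
qed

section \<open>The hexagon C6\<close>

definition V6 :: "nat set" where "V6 = {0, 1, 2, 3, 4, 5}"
definition E6 :: "nat set set" where "E6 = {{0, 1}, {1, 2}, {2, 3}, {3, 4}, {4, 5}, {5, 0}}"

definition rstep :: "nat set set \<Rightarrow> nat set \<Rightarrow> nat set" where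
  "rstep B S = S \<union> \<Union>{e \<in> B. e \<inter> S \<noteq> {}}"

lemma rstep_insert: "rstep (insert e B) S = (if e \<inter> S \<noteq> {} then e \<union> rstep B S else rstep B S)"
  unfolding rstep_def by auto

lemma rstep_empty: "rstep {} S = S" unfolding rstep_def by auto

definition R5 :: "nat set set \<Rightarrow> nat set" where
  "R5 B = (rstep B ^^ 5) {Min (\<Union>B)}"

lemma R5_unfold: "R5 B = rstep B (rstep B (rstep B (rstep B (rstep B {Min (\<Union>B)}))))"
  unfolding R5_def by (simp add: numeral_eq_Suc)

definition conn_ck :: "nat set set \<Rightarrow> bool" where
  "conn_ck B \<longleftrightarrow> \<Union>B \<subseteq> R5 B"

lemma all_Pow_insert: "(\<forall>B. B \<subseteq> insert x X \<longrightarrow> Q B) \<longleftrightarrow> (\<forall>B. B \<subseteq> X \<longrightarrow> Q B \<and> Q (insert x B))"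
proof
  assume "\<forall>B. B \<subseteq> insert x X \<longrightarrow> Q B"
  then show "\<forall>B. B \<subseteq> X \<longrightarrow> Q B \<and> Q (insert x B)" by blast
next
  assume h: "\<forall>B. B \<subseteq> X \<longrightarrow> Q B \<and> Q (insert x B)"
  show "\<forall>B. B \<subseteq> insert x X \<longrightarrow> Q B"
  proof (intro allI impI)
    fix B assume B: "B \<subseteq> insert x X"
    then have "B - {x} \<subseteq> X" by auto
    then have "Q (B - {x}) \<and> Q (insert x (B - {x}))" using h by blast
    then show "Q B" by (cases "x \<in> B") (auto simp: insert_absorb)
  qed
qed

lemma all_Pow_empty: "(\<forall>B. B \<subseteq> {} \<longrightarrow> Q B) \<longleftrightarrow> Q {}"
  by auto

lemma card_Pow_insert:
  assumes "x \<notin> X" "finite X"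
  shows "card {B. B \<subseteq> insert x X \<and> Q B} = card {B. B \<subseteq> X \<and> Q B} + card {B. B \<subseteq> X \<and> Q (insert x B)}"
proof -
  have eq: "{B. B \<subseteq> insert x X \<and> Q B} = {B. B \<subseteq> X \<and> Q B} \<union> insert x ` {B. B \<subseteq> X \<and> Q (insert x B)}"
  proof (intro equalityI subsetI)
    fix B assume "B \<in> {B. B \<subseteq> insert x X \<and> Q B}"
    then have B: "B \<subseteq> insert x X" "Q B" by auto
    show "B \<in> {B. B \<subseteq> X \<and> Q B} \<union> insert x ` {B. B \<subseteq> X \<and> Q (insert x B)}"
    proof (cases "x \<in> B")
      case True
      then have "B = insert x (B - {x})" "B - {x} \<subseteq> X" using B by auto
      then show ?thesis using B by (metis (mono_tags, lifting) UnI2 image_eqI mem_Collect_eq)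
    next
      case False then show ?thesis using B by auto
    qed
  next
    fix B assume "B \<in> {B. B \<subseteq> X \<and> Q B} \<union> insert x ` {B. B \<subseteq> X \<and> Q (insert x B)}"
    then show "B \<in> {B. B \<subseteq> insert x X \<and> Q B}" by auto
  qed
  have fin: "finite {B. B \<subseteq> X \<and> Q B}" "finite {B. B \<subseteq> X \<and> Q (insert x B)}"
    using assms(2) by (simp_all add: finite_subset[of _ "Pow X"] subset_iff)
  have inj: "inj_on (insert x) {B. B \<subseteq> X \<and> Q (insert x B)}"
    using assms(1) by (rule_tac inj_onI) (metis Diff_insert_absorb mem_Collect_eq subsetD)
  have disj: "{B. B \<subseteq> X \<and> Q B} \<inter> insert x ` {B. B \<subseteq> X \<and> Q (insert x B)} = {}"
    using assms(1) by auto
  show ?thesis unfolding eq using fin inj disj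
    by (simp add: card_Un_disjoint card_image)
qed

lemma card_Pow_empty: "card {B. B \<subseteq> {} \<and> Q B} = (if Q {} then 1 else 0)"
proof -
  have "{B. B \<subseteq> {} \<and> Q B} = (if Q {} then {{}} else {})" by auto
  then show ?thesis by simp
qed

lemma closure_fact: "\<forall>B. B \<subseteq> E6 \<longrightarrow> B \<noteq> {} \<longrightarrow> rstep B (R5 B) \<subseteq> R5 B"
  unfolding E6_def
  apply (simp only: all_Pow_insert all_Pow_empty simp_thms)
  apply (simp only: R5_unfold Union_insert Union_empty Un_empty_right Un_empty_left Un_insert_left Un_insert_right)
  apply (simp add: rstep_insert rstep_empty split del: if_split)
  done


lemma less6: "k < (6::nat) \<Longrightarrow> k = 0 \<or> k = 1 \<or> k = 2 \<or> k = 3 \<or> k = 4 \<or> k = 5"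
  by auto

lemma E6_cycle: "is_cycle E6 [0, 1, 2, 3, 4, 5]"
  unfolding is_cycle_def
proof (intro conjI allI impI)
  fix k assume "k < length [0::nat, 1, 2, 3, 4, 5]"
  then have "k < 6" by simp
  then show "{[0::nat, 1, 2, 3, 4, 5] ! k, [0::nat, 1, 2, 3, 4, 5] ! ((k + 1) mod length [0::nat, 1, 2, 3, 4, 5])} \<in> E6"
    using less6 unfolding E6_def by (elim disjE less6[elim_format]) simp_all
qed simp_all

lemma E6_not_acyclic: "\<not> acyclic_graph E6"
  unfolding acyclic_graph_def using E6_cycle by blast

lemma E6_nbrs:
  assumes "{x, y} \<in> E6" "{x, z} \<in> E6" "y \<noteq> z"
  shows "y = (x + 1) mod 6 \<or> z = (x + 1) mod 6"
  using assms unfolding E6_def by (auto simp: doubleton_eq_iff)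

lemma E6_vert: "{x, y} \<in> E6 \<Longrightarrow> x < 6"
  unfolding E6_def by (auto simp: doubleton_eq_iff)

lemma prev_mod:
  fixes k L :: nat
  assumes "0 < L" "k < L"
  shows "((k + L - 1) mod L + 1) mod L = k"
proof (cases k)
  case 0
  have "(L - 1) mod L = L - 1" using assms by simp
  then show ?thesis using 0 assms by simp
next
  case (Suc m)
  have "k + L - 1 = m + L" using Suc by simp
  then have "(k + L - 1) mod L = m" using assms Suc by simp
  then show ?thesis using Suc assms by simp
qed

lemma cycle_prev_edge:
  assumes cy: "is_cycle E vs" and k: "k < length vs"
  shows "{vs ! ((k + length vs - 1) mod length vs), vs ! k} \<in> E"
proof -
  let ?L = "length vs"
  have L0: "?L > 0" using k by linarith
  let ?j = "(k + ?L - 1) mod ?L"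
  have j: "?j < ?L" using L0 by simp
  have "(?j + 1) mod ?L = k" by (rule prev_mod[OF L0 k])
  then show ?thesis using cycle_edge[OF cy j] by simp
qed

lemma mod_two_step:
  fixes k L :: nat
  assumes "3 \<le> L" "k < L"
  shows "((k + 1) mod L + 1) mod L \<noteq> k"
proof -
  have e: "((k + 1) mod L + 1) mod L = (k + 2) mod L" by (simp add: mod_Suc_eq)
  consider "k + 2 < L" | "k + 2 = L" | "k + 2 = L + 1" using assms by linarith
  then show ?thesis
  proof cases
    case 1 then show ?thesis using e by simp
  next
    case 2 then show ?thesis using e assms by simp
  next
    case 3
    then have "(k + 2) mod L = (1 + L) mod L" by simp
    also have "\<dots> = 1" using assms by (simp only: mod_add_self2) (simp add: mod_less)
    finally show ?thesis using e 3 assms by simp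
  qed
qed

lemma acyclic_sub_E6:
  assumes B: "B \<subseteq> E6" and ne: "B \<noteq> E6"
  shows "acyclic_graph B"
  unfolding acyclic_graph_def
proof
  assume "\<exists>vs. is_cycle B vs"
  then obtain vs where cy: "is_cycle B vs" by blast
  let ?L = "length vs"
  have L3: "?L \<ge> 3" and dist: "distinct vs" using cy unfolding is_cycle_def by auto
  have step: "(x + 1) mod 6 \<in> set vs \<and> {x, (x + 1) mod 6} \<in> B" if xS: "x \<in> set vs" for x
  proof -
    obtain k where k: "k < ?L" "x = vs ! k" using xS by (metis in_set_conv_nth)
    let ?i = "(k + 1) mod ?L" and ?j = "(k + ?L - 1) mod ?L"
    have i: "?i < ?L" by (rule mod_less_divisor) (use L3 in auto)
    have j: "?j < ?L" by (rule mod_less_divisor) (use L3 in auto)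
    have ey: "{x, vs ! ?i} \<in> B" using cycle_edge[OF cy k(1)] k by simp
    have ez: "{vs ! ?j, x} \<in> B" using cycle_prev_edge[OF cy k(1)] k by simp
    then have ez': "{x, vs ! ?j} \<in> B" by (simp add: insert_commute)
    have "?i \<noteq> ?j"
    proof
      assume h: "?i = ?j"
      have "(?j + 1) mod ?L = k" by (rule prev_mod) (use L3 k(1) in auto)
      then have "(?i + 1) mod ?L = k" using h by simp
      then show False using mod_two_step[OF L3 k(1)] by simp
    qed
    then have yz: "vs ! ?i \<noteq> vs ! ?j" using nth_eq_iff_index_eq[OF dist i j] by simp
    have ey6: "{x, vs ! ?i} \<in> E6" using ey B by (rule subsetD[rotated])
    have ez6: "{x, vs ! ?j} \<in> E6" using ez' B by (rule subsetD[rotated])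
    have "vs ! ?i = (x + 1) mod 6 \<or> vs ! ?j = (x + 1) mod 6"
      by (rule E6_nbrs[OF ey6 ez6 yz])
    then show ?thesis using ey ez' i j by (metis nth_mem)
  qed
  obtain x0 where x0: "x0 \<in> set vs" using L3 by (cases vs) auto
  have x06: "x0 < 6"
  proof -
    from step[OF x0] have "{x0, (x0 + 1) mod 6} \<in> E6" using B by blast
    then show ?thesis by (rule E6_vert)
  qed
  have all: "(x0 + j) mod 6 \<in> set vs" for j
  proof (induction j)
    case 0 then show ?case using x0 x06 by simp
  next
    case (Suc j)
    from step[OF Suc] show ?case by (simp add: mod_Suc_eq)
  qed
  have inS: "x \<in> set vs" if "x < 6" for x
  proof -
    have "(x0 + (x + 6 - x0)) mod 6 = x" using that x06 by simp
    then show ?thesis using all[of "x + 6 - x0"] by simp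
  qed
  have h: "{x, (x + 1) mod 6} \<in> B" if "x < 6" for x using step[OF inS[OF that]] by simp
  have e1: "((0::nat) + 1) mod 6 = 1" "((1::nat) + 1) mod 6 = 2" "((2::nat) + 1) mod 6 = 3"
    "((3::nat) + 1) mod 6 = 4" "((4::nat) + 1) mod 6 = 5" "((5::nat) + 1) mod 6 = 0" by simp_all
  have "{0, 1} \<in> B" using h[of 0, unfolded e1] by simp
  moreover have "{1, 2} \<in> B" using h[of 1, unfolded e1] by simp
  moreover have "{2, 3} \<in> B" using h[of 2, unfolded e1] by simp
  moreover have "{3, 4} \<in> B" using h[of 3, unfolded e1] by simp
  moreover have "{4, 5} \<in> B" using h[of 4, unfolded e1] by simp
  moreover have "{5, 0} \<in> B" using h[of 5, unfolded e1] by simp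
  ultimately have "E6 \<subseteq> B" unfolding E6_def by simp
  then show False using B ne by auto
qed


lemma two_ex: "a \<noteq> b \<Longrightarrow> \<exists>x y. x \<noteq> y \<and> {a, b} = {x, y}"
  by blast

lemma two_edges_E6: "two_edges E6"
  unfolding two_edges_def E6_def by (auto intro!: two_ex)

lemma finite_E6: "finite E6" unfolding E6_def by simp

lemma E6_sub_V6: "e \<in> E6 \<Longrightarrow> e \<subseteq> V6"
  unfolding E6_def V6_def by auto

lemma rstep_mono_iter: "S \<subseteq> (rstep B ^^ k) S"
proof (induction k)
  case 0 then show ?case by simp
next
  case (Suc k) then show ?case unfolding rstep_def by auto
qed

lemma rstep_reach:
  assumes B: "B \<subseteq> E6" and w: "w \<in> (rstep B ^^ k) S"
  shows "\<exists>s\<in>S. (s, w) \<in> (adj_rel B)\<^sup>*"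
  using w
proof (induction k arbitrary: w)
  case 0 then show ?case by auto
next
  case (Suc k)
  let ?S' = "(rstep B ^^ k) S"
  have "w \<in> rstep B ?S'" using Suc.prems by simp
  then have "w \<in> ?S' \<or> (\<exists>e\<in>B. e \<inter> ?S' \<noteq> {} \<and> w \<in> e)" unfolding rstep_def by auto
  then show ?case
  proof
    assume "w \<in> ?S'" then show ?thesis using Suc.IH by blast
  next
    assume "\<exists>e\<in>B. e \<inter> ?S' \<noteq> {} \<and> w \<in> e"
    then obtain e x where e: "e \<in> B" "x \<in> e" "x \<in> ?S'" "w \<in> e" by blast
    obtain s where s: "s \<in> S" "(s, x) \<in> (adj_rel B)\<^sup>*" using Suc.IH[OF e(3)] by blast
    have "e \<in> E6" using e B by blast
    then obtain a b where ab: "a \<noteq> b" "e = {a, b}" using two_edgesD[OF two_edges_E6] by blast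
    show ?thesis
    proof (cases "x = w")
      case True then show ?thesis using s by blast
    next
      case False
      then have "{x, w} = e" using ab e by auto
      then have "(x, w) \<in> adj_rel B" using e(1) by (simp add: adj_rel_iff)
      then show ?thesis using s by (meson rtrancl.rtrancl_into_rtrancl)
    qed
  qed
qed

lemma Union_sub_fin:
  assumes B: "B \<subseteq> E6" and ne: "B \<noteq> {}"
  shows "finite (\<Union>B)" "\<Union>B \<noteq> {}" "\<Union>B \<subseteq> V6"
proof -
  have "finite B" using B finite_E6 finite_subset by blast
  moreover have "\<forall>e\<in>B. finite e" using B unfolding E6_def by auto
  ultimately show "finite (\<Union>B)" by blast
  obtain e where e: "e \<in> B" using ne by blast
  then obtain a b where "e = {a, b}" using B two_edgesD[OF two_edges_E6] by blast
  then show "\<Union>B \<noteq> {}" using e by blast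
  show "\<Union>B \<subseteq> V6" using B E6_sub_V6 by blast
qed

lemma conn_iff:
  assumes B: "B \<subseteq> E6" and ne: "B \<noteq> {}"
  shows "connected_graph (\<Union>B) B \<longleftrightarrow> conn_ck B"
proof -
  let ?m = "Min (\<Union>B)"
  have m: "?m \<in> \<Union>B" using Union_sub_fin[OF B ne] by (meson Min_in)
  show ?thesis
  proof
    assume conn: "connected_graph (\<Union>B) B"
    have "w \<in> R5 B" if "(?m, w) \<in> (adj_rel B)\<^sup>*" for w
      using that
    proof (induction rule: rtrancl_induct)
      case base
      then show ?case unfolding R5_def using rstep_mono_iter by blast
    next
      case (step x y)
      then have "{x, y} \<in> B" by (simp add: adj_rel_iff)
      then have "y \<in> rstep B (R5 B)" using step.IH unfolding rstep_def by blast
      then show ?case using closure_fact B ne by blast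
    qed
    then show "conn_ck B" unfolding conn_ck_def using conn m unfolding connected_graph_def by blast
  next
    assume ck: "conn_ck B"
    have tom: "(?m, w) \<in> (adj_rel B)\<^sup>*" if "w \<in> \<Union>B" for w
    proof -
      have "w \<in> (rstep B ^^ 5) {?m}" using ck that unfolding conn_ck_def R5_def by blast
      from rstep_reach[OF B this] show ?thesis by simp
    qed
    show "connected_graph (\<Union>B) B"
      unfolding connected_graph_def
    proof (intro ballI)
      fix u w assume u: "u \<in> \<Union>B" and w: "w \<in> \<Union>B"
      show "(u, w) \<in> (adj_rel B)\<^sup>*" by (rule rtrancl_trans[OF rtrancl_adj_sym[OF tom[OF u]] tom[OF w]])
    qed
  qed
qed

lemma acyclic_empty: "acyclic_graph {}"
  unfolding acyclic_graph_def
proof (intro notI, elim exE)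
  fix vs assume c: "is_cycle {} vs"
  have "3 \<le> length vs" using c unfolding is_cycle_def by blast
  then have "0 < length vs" by linarith
  then show False using cycle_edge[OF c] by blast
qed

lemma sub6:
  "subtrees V6 E6 = (\<lambda>u. ({u}, {})) ` V6 \<union> (\<lambda>B. (\<Union>B, B)) ` {B. B \<subseteq> E6 \<and> B \<noteq> {} \<and> B \<noteq> E6 \<and> conn_ck B}"
proof (intro equalityI subsetI)
  fix T assume T: "T \<in> subtrees V6 E6"
  obtain A B where AB: "T = (A, B)" by (cases T) auto
  from T AB have s: "A \<subseteq> V6" "B \<subseteq> E6" "\<forall>e\<in>B. e \<subseteq> A" "is_tree A B" unfolding subtrees_def by auto
  from s(4) have ne: "A \<noteq> {}" and conn: "connected_graph A B" and ac: "acyclic_graph B"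
    unfolding is_tree_def by auto
  show "T \<in> (\<lambda>u. ({u}, {})) ` V6 \<union> (\<lambda>B. (\<Union>B, B)) ` {B. B \<subseteq> E6 \<and> B \<noteq> {} \<and> B \<noteq> E6 \<and> conn_ck B}"
  proof (cases "B = {}")
    case True
    obtain u where u: "u \<in> A" using ne by blast
    have "A = {u}"
    proof
      show "A \<subseteq> {u}"
      proof
        fix w assume "w \<in> A"
        then have "(u, w) \<in> (adj_rel B)\<^sup>*" using conn u unfolding connected_graph_def by blast
        moreover have "adj_rel B = {}" using True unfolding adj_rel_def by simp
        ultimately show "w \<in> {u}" by simp
      qed
    qed (use u in simp)
    then show ?thesis using AB True s(1) by auto
  next
    case False
    have AU: "A = \<Union>B"
    proof
      show "\<Union>B \<subseteq> A" using s(3) by blast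
      show "A \<subseteq> \<Union>B"
      proof
        fix u assume u: "u \<in> A"
        obtain e where e: "e \<in> B" using False by blast
        then obtain a b where ab: "e = {a, b}" using s(2) two_edgesD[OF two_edges_E6] by blast
        then have aA: "a \<in> A" using s(3) e by blast
        have "(u, a) \<in> (adj_rel B)\<^sup>*" using conn u aA unfolding connected_graph_def by blast
        then show "u \<in> \<Union>B"
        proof (cases rule: converse_rtranclE)
          case base then show ?thesis using e ab by blast
        next
          case (step y)
          then have "{u, y} \<in> B" by (simp add: adj_rel_iff)
          then show ?thesis by blast
        qed
      qed
    qed
    have "B \<noteq> E6" using ac E6_not_acyclic by blast
    moreover have "conn_ck B" using conn_iff[OF s(2) False] conn AU by simp
    ultimately show ?thesis using AB AU s(2) False by blast
  qed
next
  fix T assume "T \<in> (\<lambda>u. ({u}, {})) ` V6 \<union> (\<lambda>B. (\<Union>B, B)) ` {B. B \<subseteq> E6 \<and> B \<noteq> {} \<and> B \<noteq> E6 \<and> conn_ck B}"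
  then show "T \<in> subtrees V6 E6"
  proof
    assume "T \<in> (\<lambda>u. ({u}, {})) ` V6"
    then obtain u where u: "u \<in> V6" "T = ({u}, {})" by blast
    have "is_tree {u} {}" unfolding is_tree_def connected_graph_def using acyclic_empty by simp
    then show ?thesis unfolding subtrees_def using u by simp
  next
    assume "T \<in> (\<lambda>B. (\<Union>B, B)) ` {B. B \<subseteq> E6 \<and> B \<noteq> {} \<and> B \<noteq> E6 \<and> conn_ck B}"
    then obtain B where B: "T = (\<Union>B, B)" "B \<subseteq> E6" "B \<noteq> {}" "B \<noteq> E6" "conn_ck B" by blast
    have "connected_graph (\<Union>B) B" using conn_iff[OF B(2) B(3)] B(5) by simp
    moreover have "acyclic_graph B" using acyclic_sub_E6[OF B(2) B(4)] .
    moreover have "\<Union>B \<noteq> {}" "\<Union>B \<subseteq> V6" using Union_sub_fin[OF B(2) B(3)] by auto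
    ultimately show ?thesis unfolding subtrees_def is_tree_def using B by auto
  qed
qed

lemma cnt6:
  "cnt V6 E6 P = card {u \<in> V6. P {u}} + card {B. B \<subseteq> E6 \<and> (B \<noteq> {} \<and> (\<exists>e\<in>E6. e \<notin> B) \<and> conn_ck B \<and> P (\<Union>B))}"
proof -
  let ?X = "{u \<in> V6. P {u}}"
  let ?Y = "{B. B \<subseteq> E6 \<and> (B \<noteq> {} \<and> (\<exists>e\<in>E6. e \<notin> B) \<and> conn_ck B \<and> P (\<Union>B))}"
  have eq: "{T \<in> subtrees V6 E6. P (fst T)} = (\<lambda>u. ({u}, {})) ` ?X \<union> (\<lambda>B. (\<Union>B, B)) ` ?Y"
    unfolding sub6 by auto
  have fX: "finite ?X" unfolding V6_def by simp
  have fY: "finite ?Y" using finite_E6 by (rule_tac finite_subset[of _ "Pow E6"]) auto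
  have i1: "inj_on (\<lambda>u. ({u}, {})) ?X" by (rule inj_onI) simp
  have i2: "inj_on (\<lambda>B. (\<Union>B, B)) ?Y" by (rule inj_onI) simp
  have d: "(\<lambda>u. ({u}, {})) ` ?X \<inter> (\<lambda>B. (\<Union>B, B)) ` ?Y = {}" by auto
  have c1: "card ((\<lambda>u. ({u}, {})) ` ?X) = card ?X" by (rule card_image[OF i1])
  have c2: "card ((\<lambda>B. (\<Union>B, B)) ` ?Y) = card ?Y" by (rule card_image[OF i2])
  show ?thesis unfolding cnt_def eq
    using fX fY d c1 c2 by (simp add: card_Un_disjoint)
qed

lemma card_filter_insert:
  assumes "a \<notin> X" "finite X"
  shows "card {u \<in> insert a X. Q u} = (if Q a then 1 else 0) + card {u \<in> X. Q u}"
proof (cases "Q a")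
  case True
  have "{u \<in> insert a X. Q u} = insert a {u \<in> X. Q u}" using True by auto
  then show ?thesis using assms True by simp
next
  case False
  have "{u \<in> insert a X. Q u} = {u \<in> X. Q u}" using False by auto
  then show ?thesis using False by simp
qed

lemma cV6: "card {u \<in> V6. Q u} = (if Q 0 then 1 else 0) + (if Q 1 then 1 else 0) + (if Q 2 then 1 else 0)
   + (if Q 3 then 1 else 0) + (if Q 4 then 1 else 0) + (if Q 5 then 1 else 0)"
proof -
  have "card {u \<in> V6. Q u} = (\<Sum>u\<in>V6. if Q u then 1 else 0)"
    unfolding card_eq_sum by (rule sum.inter_filter) (simp add: V6_def)
  also have "\<dots> = (if Q 0 then 1 else 0) + (if Q 1 then 1 else 0) + (if Q 2 then 1 else 0)
   + (if Q 3 then 1 else 0) + (if Q 4 then 1 else 0) + (if Q 5 then 1 else 0)"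
    unfolding V6_def by (simp split del: if_split)
  finally show ?thesis .
qed

lemma c6_true: "cnt V6 E6 (\<lambda>_. True) = 36"
proof -
  have a: "card {u \<in> V6. (\<lambda>_. True) {u}} + card {B. B \<subseteq> E6 \<and> (B \<noteq> {} \<and> (\<exists>e\<in>E6. e \<notin> B) \<and> conn_ck B \<and> (\<lambda>_. True) (\<Union>B))} = 36"
    unfolding cV6 E6_def
    apply (simp only: card_Pow_insert card_Pow_empty insert_iff empty_iff doubleton_eq_iff simp_thms
         numeral_eq_iff semiring_norm zero_neq_numeral numeral_neq_zero finite_insert finite.emptyI)
    apply (simp only: conn_ck_def R5_unfold Union_insert Union_empty Un_empty_right Un_empty_left Un_insert_left Un_insert_right)
    apply (simp add: rstep_insert rstep_empty doubleton_eq_iff split del: if_split)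
    done
  then show ?thesis unfolding cnt6 .
qed

lemma c6_n0: "cnt V6 E6 (\<lambda>A. 0 \<notin> A) = 15"
proof -
  have a: "card {u \<in> V6. (\<lambda>A. 0 \<notin> A) {u}} + card {B. B \<subseteq> E6 \<and> (B \<noteq> {} \<and> (\<exists>e\<in>E6. e \<notin> B) \<and> conn_ck B \<and> (\<lambda>A. 0 \<notin> A) (\<Union>B))} = 15"
    unfolding cV6 E6_def
    apply (simp only: card_Pow_insert card_Pow_empty insert_iff empty_iff doubleton_eq_iff simp_thms
         numeral_eq_iff semiring_norm zero_neq_numeral numeral_neq_zero finite_insert finite.emptyI)
    apply (simp only: conn_ck_def R5_unfold Union_insert Union_empty Un_empty_right Un_empty_left Un_insert_left Un_insert_right)
    apply (simp add: rstep_insert rstep_empty doubleton_eq_iff split del: if_split)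
    done
  then show ?thesis unfolding cnt6 .
qed

lemma c6_0: "cnt V6 E6 (\<lambda>A. 0 \<in> A) = 21"
proof -
  have a: "card {u \<in> V6. (\<lambda>A. 0 \<in> A) {u}} + card {B. B \<subseteq> E6 \<and> (B \<noteq> {} \<and> (\<exists>e\<in>E6. e \<notin> B) \<and> conn_ck B \<and> (\<lambda>A. 0 \<in> A) (\<Union>B))} = 21"
    unfolding cV6 E6_def
    apply (simp only: card_Pow_insert card_Pow_empty insert_iff empty_iff doubleton_eq_iff simp_thms
         numeral_eq_iff semiring_norm zero_neq_numeral numeral_neq_zero finite_insert finite.emptyI)
    apply (simp only: conn_ck_def R5_unfold Union_insert Union_empty Un_empty_right Un_empty_left Un_insert_left Un_insert_right)
    apply (simp add: rstep_insert rstep_empty doubleton_eq_iff split del: if_split)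
    done
  then show ?thesis unfolding cnt6 .
qed

lemma c6_1: "cnt V6 E6 (\<lambda>A. 1 \<in> A) = 21"
proof -
  have a: "card {u \<in> V6. (\<lambda>A. 1 \<in> A) {u}} + card {B. B \<subseteq> E6 \<and> (B \<noteq> {} \<and> (\<exists>e\<in>E6. e \<notin> B) \<and> conn_ck B \<and> (\<lambda>A. 1 \<in> A) (\<Union>B))} = 21"
    unfolding cV6 E6_def
    apply (simp only: card_Pow_insert card_Pow_empty insert_iff empty_iff doubleton_eq_iff simp_thms
         numeral_eq_iff semiring_norm zero_neq_numeral numeral_neq_zero finite_insert finite.emptyI)
    apply (simp only: conn_ck_def R5_unfold Union_insert Union_empty Un_empty_right Un_empty_left Un_insert_left Un_insert_right)
    apply (simp add: rstep_insert rstep_empty doubleton_eq_iff split del: if_split)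
    done
  then show ?thesis unfolding cnt6 .
qed

lemma c6_n0_1: "cnt V6 E6 (\<lambda>A. 0 \<notin> A \<and> 1 \<in> A) = 5"
proof -
  have a: "card {u \<in> V6. (\<lambda>A. 0 \<notin> A \<and> 1 \<in> A) {u}} + card {B. B \<subseteq> E6 \<and> (B \<noteq> {} \<and> (\<exists>e\<in>E6. e \<notin> B) \<and> conn_ck B \<and> (\<lambda>A. 0 \<notin> A \<and> 1 \<in> A) (\<Union>B))} = 5"
    unfolding cV6 E6_def
    apply (simp only: card_Pow_insert card_Pow_empty insert_iff empty_iff doubleton_eq_iff simp_thms
         numeral_eq_iff semiring_norm zero_neq_numeral numeral_neq_zero finite_insert finite.emptyI)
    apply (simp only: conn_ck_def R5_unfold Union_insert Union_empty Un_empty_right Un_empty_left Un_insert_left Un_insert_right)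
    apply (simp add: rstep_insert rstep_empty doubleton_eq_iff split del: if_split)
    done
  then show ?thesis unfolding cnt6 .
qed

lemma c6_0_1: "cnt V6 E6 (\<lambda>A. 0 \<in> A \<and> 1 \<in> A) = 16"
proof -
  have a: "card {u \<in> V6. (\<lambda>A. 0 \<in> A \<and> 1 \<in> A) {u}} + card {B. B \<subseteq> E6 \<and> (B \<noteq> {} \<and> (\<exists>e\<in>E6. e \<notin> B) \<and> conn_ck B \<and> (\<lambda>A. 0 \<in> A \<and> 1 \<in> A) (\<Union>B))} = 16"
    unfolding cV6 E6_def
    apply (simp only: card_Pow_insert card_Pow_empty insert_iff empty_iff doubleton_eq_iff simp_thms
         numeral_eq_iff semiring_norm zero_neq_numeral numeral_neq_zero finite_insert finite.emptyI)
    apply (simp only: conn_ck_def R5_unfold Union_insert Union_empty Un_empty_right Un_empty_left Un_insert_left Un_insert_right)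
    apply (simp add: rstep_insert rstep_empty doubleton_eq_iff split del: if_split)
    done
  then show ?thesis unfolding cnt6 .
qed

lemma c6_n0_2: "cnt V6 E6 (\<lambda>A. 0 \<notin> A \<and> 2 \<in> A) = 8"
proof -
  have a: "card {u \<in> V6. (\<lambda>A. 0 \<notin> A \<and> 2 \<in> A) {u}} + card {B. B \<subseteq> E6 \<and> (B \<noteq> {} \<and> (\<exists>e\<in>E6. e \<notin> B) \<and> conn_ck B \<and> (\<lambda>A. 0 \<notin> A \<and> 2 \<in> A) (\<Union>B))} = 8"
    unfolding cV6 E6_def
    apply (simp only: card_Pow_insert card_Pow_empty insert_iff empty_iff doubleton_eq_iff simp_thms
         numeral_eq_iff semiring_norm zero_neq_numeral numeral_neq_zero finite_insert finite.emptyI)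
    apply (simp only: conn_ck_def R5_unfold Union_insert Union_empty Un_empty_right Un_empty_left Un_insert_left Un_insert_right)
    apply (simp add: rstep_insert rstep_empty doubleton_eq_iff split del: if_split)
    done
  then show ?thesis unfolding cnt6 .
qed

lemma c6_0_2: "cnt V6 E6 (\<lambda>A. 0 \<in> A \<and> 2 \<in> A) = 13"
proof -
  have a: "card {u \<in> V6. (\<lambda>A. 0 \<in> A \<and> 2 \<in> A) {u}} + card {B. B \<subseteq> E6 \<and> (B \<noteq> {} \<and> (\<exists>e\<in>E6. e \<notin> B) \<and> conn_ck B \<and> (\<lambda>A. 0 \<in> A \<and> 2 \<in> A) (\<Union>B))} = 13"
    unfolding cV6 E6_def
    apply (simp only: card_Pow_insert card_Pow_empty insert_iff empty_iff doubleton_eq_iff simp_thms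
         numeral_eq_iff semiring_norm zero_neq_numeral numeral_neq_zero finite_insert finite.emptyI)
    apply (simp only: conn_ck_def R5_unfold Union_insert Union_empty Un_empty_right Un_empty_left Un_insert_left Un_insert_right)
    apply (simp add: rstep_insert rstep_empty doubleton_eq_iff split del: if_split)
    done
  then show ?thesis unfolding cnt6 .
qed

lemma c6_n0_3: "cnt V6 E6 (\<lambda>A. 0 \<notin> A \<and> 3 \<in> A) = 9"
proof -
  have a: "card {u \<in> V6. (\<lambda>A. 0 \<notin> A \<and> 3 \<in> A) {u}} + card {B. B \<subseteq> E6 \<and> (B \<noteq> {} \<and> (\<exists>e\<in>E6. e \<notin> B) \<and> conn_ck B \<and> (\<lambda>A. 0 \<notin> A \<and> 3 \<in> A) (\<Union>B))} = 9"
    unfolding cV6 E6_def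
    apply (simp only: card_Pow_insert card_Pow_empty insert_iff empty_iff doubleton_eq_iff simp_thms
         numeral_eq_iff semiring_norm zero_neq_numeral numeral_neq_zero finite_insert finite.emptyI)
    apply (simp only: conn_ck_def R5_unfold Union_insert Union_empty Un_empty_right Un_empty_left Un_insert_left Un_insert_right)
    apply (simp add: rstep_insert rstep_empty doubleton_eq_iff split del: if_split)
    done
  then show ?thesis unfolding cnt6 .
qed

lemma c6_0_3: "cnt V6 E6 (\<lambda>A. 0 \<in> A \<and> 3 \<in> A) = 12"
proof -
  have a: "card {u \<in> V6. (\<lambda>A. 0 \<in> A \<and> 3 \<in> A) {u}} + card {B. B \<subseteq> E6 \<and> (B \<noteq> {} \<and> (\<exists>e\<in>E6. e \<notin> B) \<and> conn_ck B \<and> (\<lambda>A. 0 \<in> A \<and> 3 \<in> A) (\<Union>B))} = 12"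
    unfolding cV6 E6_def
    apply (simp only: card_Pow_insert card_Pow_empty insert_iff empty_iff doubleton_eq_iff simp_thms
         numeral_eq_iff semiring_norm zero_neq_numeral numeral_neq_zero finite_insert finite.emptyI)
    apply (simp only: conn_ck_def R5_unfold Union_insert Union_empty Un_empty_right Un_empty_left Un_insert_left Un_insert_right)
    apply (simp add: rstep_insert rstep_empty doubleton_eq_iff split del: if_split)
    done
  then show ?thesis unfolding cnt6 .
qed

definition hx :: "nat list \<Rightarrow> nat \<Rightarrow> nat \<Rightarrow> nat \<times> nat" where
  "hx cs k j = spiro_canon cs (k, j)"

lemma V6_alt: "V6 = {0..<6}" unfolding V6_def by auto

lemma E6_alt: "E6 = (\<lambda>j. {j, (j + 1) mod 6}) ` {0..<6}"
proof -
  have "{0..<6::nat} = {0, 1, 2, 3, 4, 5}" by auto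
  then have "(\<lambda>j. {j, (j + 1) mod 6}) ` {0..<6::nat} = {{0, (0 + 1) mod 6}, {1, (1 + 1) mod 6},
     {2, (2 + 1) mod 6}, {3, (3 + 1) mod 6}, {4, (4 + 1) mod 6}, {5, (5 + 1) mod 6}}"
    by (simp only: image_insert image_empty)
  moreover have e1: "((0::nat) + 1) mod 6 = 1" "((1::nat) + 1) mod 6 = 2" "((2::nat) + 1) mod 6 = 3"
    "((3::nat) + 1) mod 6 = 4" "((4::nat) + 1) mod 6 = 5" "((5::nat) + 1) mod 6 = 0" by simp_all
  ultimately show ?thesis unfolding E6_def by (simp only: e1)
qed

lemma canon_simp: "spiro_canon cs (i, j) = (if j = 0 \<and> i > 0 then (i - 1, spiro_exit cs (i - 1)) else (i, j))"
  unfolding spiro_canon_def by simp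

lemma canon_fst: "fst (spiro_canon cs (i, j)) \<le> i"
  unfolding canon_simp by auto

lemma dom_split: "{(i, j). i < Suc k \<and> j < (6::nat)} = {(i, j). i < k \<and> j < 6} \<union> Pair k ` {0..<6}"
  by auto

lemma spiro_V_Suc: "spiro_V (Suc k) cs = spiro_V k cs \<union> hx cs k ` V6"
  unfolding spiro_V_def dom_split V6_alt hx_def by (auto simp: image_Un image_image)

lemma spiro_E_Suc: "spiro_E (Suc k) cs = spiro_E k cs \<union> (`) (hx cs k) ` E6"
proof -
  have "(\<lambda>(i, j). {spiro_canon cs (i, j), spiro_canon cs (i, (j + 1) mod 6)}) ` (Pair k ` {0..<6})
      = (`) (hx cs k) ` E6"
    unfolding E6_alt hx_def by (auto simp: image_image)
  then show ?thesis unfolding spiro_E_def dom_split image_Un by simp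
qed

lemma spiro_V_0: "spiro_V 0 cs = {}" unfolding spiro_V_def by auto
lemma spiro_E_0: "spiro_E 0 cs = {}" unfolding spiro_E_def by auto

lemma hx_inj: "inj_on (hx cs k) V6"
  unfolding V6_alt hx_def by (rule inj_onI) (auto simp: canon_simp split: if_splits)

lemma spiro_V_fst: "p \<in> spiro_V k cs \<Longrightarrow> fst p < k"
proof -
  assume "p \<in> spiro_V k cs"
  then obtain i j where "i < k" "p = spiro_canon cs (i, j)" unfolding spiro_V_def by auto
  then show "fst p < k" using canon_fst[of cs i j] by simp
qed

lemma hx_nz: "0 < j \<Longrightarrow> hx cs k j = (k, j)"
  unfolding hx_def canon_simp by simp

lemma hx_0: "0 < k \<Longrightarrow> hx cs k 0 = (k - 1, spiro_exit cs (k - 1))"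
  unfolding hx_def canon_simp by simp

lemma spiro_int:
  assumes k: "0 < k" and e: "0 < spiro_exit cs (k - 1)" "spiro_exit cs (k - 1) < 6"
  shows "spiro_V k cs \<inter> hx cs k ` V6 = {hx cs k 0}"
proof
  show "spiro_V k cs \<inter> hx cs k ` V6 \<subseteq> {hx cs k 0}"
  proof
    fix p assume p: "p \<in> spiro_V k cs \<inter> hx cs k ` V6"
    then obtain j where j: "j \<in> V6" "p = hx cs k j" by auto
    have "fst p < k" using p spiro_V_fst by blast
    then have "j = 0" using j hx_nz by (cases "j = 0") auto
    then show "p \<in> {hx cs k 0}" using j by simp
  qed
next
  have "hx cs k 0 = spiro_canon cs (k - 1, spiro_exit cs (k - 1))"
    using k e by (simp add: hx_0 canon_simp)
  moreover have "(k - 1, spiro_exit cs (k - 1)) \<in> {(i, j). i < k \<and> j < 6}" using k e by auto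
  ultimately have "hx cs k 0 \<in> spiro_V k cs" unfolding spiro_V_def by blast
  moreover have "hx cs k 0 \<in> hx cs k ` V6" unfolding V6_def by simp
  ultimately show "{hx cs k 0} \<subseteq> spiro_V k cs \<inter> hx cs k ` V6" by simp
qed

lemma spiro_E_sub: "\<forall>e\<in>spiro_E k cs. e \<subseteq> spiro_V k cs"
  unfolding spiro_E_def spiro_V_def by auto

lemma hex_E_sub: "\<forall>e\<in>(`) (hx cs k) ` E6. e \<subseteq> hx cs k ` V6"
  using E6_sub_V6 by blast

lemma E6_inV6: "\<forall>e\<in>E6. e \<subseteq> V6" using E6_sub_V6 by blast

lemma two_edges_spiro: "two_edges (spiro_E k cs)"
  unfolding two_edges_def
proof
  fix e assume "e \<in> spiro_E k cs"
  then obtain i j where ij: "i < k" "j < 6" "e = {spiro_canon cs (i, j), spiro_canon cs (i, (j + 1) mod 6)}"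
    unfolding spiro_E_def by auto
  have "j \<in> V6" "(j + 1) mod 6 \<in> V6" using ij unfolding V6_alt by auto
  moreover have "j \<noteq> (j + 1) mod 6" using ij by (cases "j = 5") auto
  ultimately have "hx cs i j \<noteq> hx cs i ((j + 1) mod 6)" using hx_inj inj_on_eq_iff by metis
  then show "\<exists>a b. a \<noteq> b \<and> e = {a, b}" using ij unfolding hx_def by blast
qed

lemma finite_spiro: "finite (spiro_V k cs)" "finite (spiro_E k cs)"
proof -
  have "{(i, j). i < k \<and> j < (6::nat)} \<subseteq> {..<k} \<times> {..<6}" by auto
  then have f: "finite {(i, j). i < k \<and> j < (6::nat)}" by (rule finite_subset) simp
  show "finite (spiro_V k cs)" "finite (spiro_E k cs)" unfolding spiro_V_def spiro_E_def using f by simp_all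
qed

lemma cnt_cong:
  assumes "\<And>A B. (A, B) \<in> subtrees V E \<Longrightarrow> P A = Q A"
  shows "cnt V E P = cnt V E Q"
proof -
  have "{T \<in> subtrees V E. P (fst T)} = {T \<in> subtrees V E. Q (fst T)}" using assms by force
  then show ?thesis unfolding cnt_def by simp
qed

lemma hex_cnt:
  "cnt (hx cs k ` V6) ((`) (hx cs k) ` E6) P = cnt V6 E6 (\<lambda>A. P (hx cs k ` A))"
  by (rule cnt_image[OF hx_inj E6_inV6])

lemma hx_mem: "A \<subseteq> V6 \<Longrightarrow> j \<in> V6 \<Longrightarrow> hx cs k j \<in> hx cs k ` A \<longleftrightarrow> j \<in> A"
  using hx_inj by (meson inj_on_image_mem_iff)

lemma sub_V6: "(A, B) \<in> subtrees V6 E6 \<Longrightarrow> A \<subseteq> V6"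
  unfolding subtrees_def by auto

lemma cnt_hex_conv:
  assumes "\<And>A. A \<subseteq> V6 \<Longrightarrow> P (hx cs k ` A) = Q A"
  shows "cnt (hx cs k ` V6) ((`) (hx cs k) ` E6) P = cnt V6 E6 Q"
  unfolding hex_cnt by (rule cnt_cong) (use assms sub_V6 in blast)

lemma V6_mem: "0 \<in> V6" "1 \<in> V6" "2 \<in> V6" "3 \<in> V6" "4 \<in> V6" "5 \<in> V6"
  unfolding V6_def by simp_all

lemma rec_STN:
  assumes k: "0 < k" and e: "0 < spiro_exit cs (k - 1)" "spiro_exit cs (k - 1) < 6"
  shows "STN (spiro_V (Suc k) cs) (spiro_E (Suc k) cs) =
         STN (spiro_V k cs) (spiro_E k cs) + 15 + 20 * cnt (spiro_V k cs) (spiro_E k cs) (\<lambda>A. hx cs k 0 \<in> A)"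
proof -
  let ?V1 = "spiro_V k cs" and ?E1 = "spiro_E k cs" and ?V2 = "hx cs k ` V6" and ?E2 = "(`) (hx cs k) ` E6"
  let ?v = "hx cs k 0"
  have int: "?V1 \<inter> ?V2 = {?v}" by (rule spiro_int[OF k e])
  have te: "two_edges (?E1 \<union> ?E2)" using two_edges_spiro[of "Suc k" cs] by (simp add: spiro_E_Suc)
  have fin: "finite ?V1" "finite ?V2" "finite ?E1" "finite ?E2"
    using finite_spiro finite_E6 by (auto simp: V6_def)
  have g: "cnt (?V1 \<union> ?V2) (?E1 \<union> ?E2) (\<lambda>_. True) =
      cnt ?V1 ?E1 (\<lambda>A. ?v \<notin> A \<and> True) + cnt ?V2 ?E2 (\<lambda>A. ?v \<notin> A \<and> True)
      + cnt ?V1 ?E1 (\<lambda>A. ?v \<in> A) * cnt ?V2 ?E2 (\<lambda>A. ?v \<in> A \<and> True)"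
    by (rule glue_count[OF int spiro_E_sub hex_E_sub te fin]) simp
  have h1: "cnt ?V2 ?E2 (\<lambda>A. ?v \<notin> A \<and> True) = 15"
  proof -
    have "cnt ?V2 ?E2 (\<lambda>A. ?v \<notin> A \<and> True) = cnt V6 E6 (\<lambda>A. 0 \<notin> A)"
      by (rule cnt_hex_conv) (simp add: hx_mem V6_mem)
    then show ?thesis using c6_n0 by simp
  qed
  have h2: "cnt ?V2 ?E2 (\<lambda>A. ?v \<in> A \<and> True) = 21"
  proof -
    have "cnt ?V2 ?E2 (\<lambda>A. ?v \<in> A \<and> True) = cnt V6 E6 (\<lambda>A. 0 \<in> A)"
      by (rule cnt_hex_conv) (simp add: hx_mem V6_mem)
    then show ?thesis using c6_0 by simp
  qed
  have sp: "cnt ?V1 ?E1 (\<lambda>_. True) = cnt ?V1 ?E1 (\<lambda>A. ?v \<in> A \<and> True) + cnt ?V1 ?E1 (\<lambda>A. \<not> ?v \<in> A \<and> True)"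
    by (rule cnt_split) (use fin in auto)
  show ?thesis using g h1 h2 sp
    by (simp add: STN_cnt spiro_V_Suc spiro_E_Suc)
qed

lemma cnt_empty_pred:
  assumes "\<And>A B. (A, B) \<in> subtrees V E \<Longrightarrow> \<not> P A"
  shows "cnt V E P = 0"
proof -
  have "\<forall>T \<in> subtrees V E. \<not> P (fst T)"
  proof
    fix T assume "T \<in> subtrees V E"
    then show "\<not> P (fst T)" using assms[of "fst T" "snd T"] by simp
  qed
  then have "{T \<in> subtrees V E. P (fst T)} = {}" by blast
  then show ?thesis unfolding cnt_def by (simp only: card.empty)
qed

lemma rec_F:
  assumes k: "0 < k" and e: "0 < spiro_exit cs (k - 1)" "spiro_exit cs (k - 1) < 6"
    and d: "d \<in> {1, 2, 3}"
  shows "cnt (spiro_V (Suc k) cs) (spiro_E (Suc k) cs) (\<lambda>A. hx cs k d \<in> A) =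
         cnt V6 E6 (\<lambda>A. 0 \<notin> A \<and> d \<in> A) + cnt (spiro_V k cs) (spiro_E k cs) (\<lambda>A. hx cs k 0 \<in> A) * cnt V6 E6 (\<lambda>A. 0 \<in> A \<and> d \<in> A)"
proof -
  let ?V1 = "spiro_V k cs" and ?E1 = "spiro_E k cs" and ?V2 = "hx cs k ` V6" and ?E2 = "(`) (hx cs k) ` E6"
  let ?v = "hx cs k 0" and ?w = "hx cs k d"
  have int: "?V1 \<inter> ?V2 = {?v}" by (rule spiro_int[OF k e])
  have te: "two_edges (?E1 \<union> ?E2)" using two_edges_spiro[of "Suc k" cs] by (simp add: spiro_E_Suc)
  have fin: "finite ?V1" "finite ?V2" "finite ?E1" "finite ?E2"
    using finite_spiro finite_E6 by (auto simp: V6_def)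
  have dV: "d \<in> V6" using d V6_mem by auto
  have "0 < d" using d by auto
  then have wk: "?w = (k, d)" by (rule hx_nz)
  have wV1: "?w \<notin> ?V1" using wk spiro_V_fst by fastforce
  have g: "cnt (?V1 \<union> ?V2) (?E1 \<union> ?E2) (\<lambda>A. ?w \<in> A) =
      cnt ?V1 ?E1 (\<lambda>A. ?v \<notin> A \<and> ?w \<in> A) + cnt ?V2 ?E2 (\<lambda>A. ?v \<notin> A \<and> ?w \<in> A)
      + cnt ?V1 ?E1 (\<lambda>A. ?v \<in> A) * cnt ?V2 ?E2 (\<lambda>A. ?v \<in> A \<and> ?w \<in> A)"
    by (rule glue_count[OF int spiro_E_sub hex_E_sub te fin]) (use wV1 in auto)
  have z: "cnt ?V1 ?E1 (\<lambda>A. ?v \<notin> A \<and> ?w \<in> A) = 0"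
    by (rule cnt_empty_pred) (use wV1 in \<open>auto simp: subtrees_def\<close>)
  have h1: "cnt ?V2 ?E2 (\<lambda>A. ?v \<notin> A \<and> ?w \<in> A) = cnt V6 E6 (\<lambda>A. 0 \<notin> A \<and> d \<in> A)"
    by (rule cnt_hex_conv) (simp add: hx_mem V6_mem dV)
  have h2: "cnt ?V2 ?E2 (\<lambda>A. ?v \<in> A \<and> ?w \<in> A) = cnt V6 E6 (\<lambda>A. 0 \<in> A \<and> d \<in> A)"
    by (rule cnt_hex_conv) (simp add: hx_mem V6_mem dV)
  show ?thesis using g z h1 h2 by (simp add: spiro_V_Suc spiro_E_Suc)
qed

definition phi :: "nat \<Rightarrow> nat" where "phi d = d * (6 - d)"
definition gam :: "nat \<Rightarrow> nat" where "gam d = (if d = 1 then 16 else if d = 2 then 13 else 12)"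
definition stepf :: "nat \<times> nat \<Rightarrow> nat \<Rightarrow> nat \<times> nat" where
  "stepf sf d = (fst sf + 15 + 20 * snd sf, phi d + gam d * snd sf)"
definition SF :: "nat list \<Rightarrow> nat \<times> nat" where "SF xs = foldl stepf (36, 21) xs"

lemma SF_snoc: "SF (xs @ [d]) = stepf (SF xs) d"
  unfolding SF_def by simp

lemma phi_val: "d \<in> {1, 2, 3} \<Longrightarrow> cnt V6 E6 (\<lambda>A. 0 \<notin> A \<and> d \<in> A) = phi d"
  using c6_n0_1 c6_n0_2 c6_n0_3 unfolding phi_def by auto

lemma gam_val: "d \<in> {1, 2, 3} \<Longrightarrow> cnt V6 E6 (\<lambda>A. 0 \<in> A \<and> d \<in> A) = gam d"
  using c6_0_1 c6_0_2 c6_0_3 unfolding gam_def by auto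

lemma exit_ok:
  assumes cs: "set cs \<subseteq> {1, 2, 3}" and m: "m \<le> length cs"
  shows "0 < spiro_exit cs m \<and> spiro_exit cs m < 6"
proof (cases "m = 0")
  case True then show ?thesis unfolding spiro_exit_def by simp
next
  case False
  then have "m - 1 < length cs" using m by simp
  then have "cs ! (m - 1) \<in> {1, 2, 3}" using cs nth_mem by blast
  then show ?thesis using False unfolding spiro_exit_def by auto
qed

lemma chain:
  assumes cs: "set cs \<subseteq> {1, 2, 3}"
  shows "m \<le> length cs \<Longrightarrow>
    (STN (spiro_V (Suc m) cs) (spiro_E (Suc m) cs), cnt (spiro_V (Suc m) cs) (spiro_E (Suc m) cs) (\<lambda>A. hx cs (Suc m) 0 \<in> A))
     = SF (take m cs)"
proof (induction m)
  case 0
  have V1: "spiro_V (Suc 0) cs = hx cs 0 ` V6" by (simp add: spiro_V_Suc spiro_V_0)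
  have E1: "spiro_E (Suc 0) cs = (`) (hx cs 0) ` E6" by (simp add: spiro_E_Suc spiro_E_0)
  have s: "STN (spiro_V (Suc 0) cs) (spiro_E (Suc 0) cs) = 36"
    unfolding STN_cnt V1 E1 hex_cnt using c6_true by simp
  have h10: "hx cs (Suc 0) 0 = hx cs 0 1" by (simp add: hx_0 hx_nz spiro_exit_def)
  have f: "cnt (spiro_V (Suc 0) cs) (spiro_E (Suc 0) cs) (\<lambda>A. hx cs (Suc 0) 0 \<in> A) = 21"
  proof -
    have "cnt (hx cs 0 ` V6) ((`) (hx cs 0) ` E6) (\<lambda>A. hx cs 0 1 \<in> A) = cnt V6 E6 (\<lambda>A. 1 \<in> A)"
      by (rule cnt_hex_conv, rule hx_mem, assumption, rule V6_mem)
    then show ?thesis unfolding V1 E1 h10 using c6_1 by simp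
  qed
  show ?case using s f by (simp add: SF_def)
next
  case (Suc m)
  then have m: "m < length cs" by simp
  let ?k = "Suc m"
  have IH: "(STN (spiro_V ?k cs) (spiro_E ?k cs), cnt (spiro_V ?k cs) (spiro_E ?k cs) (\<lambda>A. hx cs ?k 0 \<in> A))
     = SF (take m cs)" using Suc m by simp
  have e: "0 < spiro_exit cs (?k - 1)" "spiro_exit cs (?k - 1) < 6" using exit_ok[OF cs, of m] m by auto
  have d: "cs ! m \<in> {1, 2, 3}" using cs m nth_mem by blast
  have "0 < cs ! m" using d by auto
  then have w1: "hx cs ?k (cs ! m) = (?k, cs ! m)" by (rule hx_nz)
  have w: "hx cs (Suc ?k) 0 = hx cs ?k (cs ! m)"
    unfolding w1 by (simp add: hx_0 spiro_exit_def)
  have r1: "STN (spiro_V (Suc ?k) cs) (spiro_E (Suc ?k) cs) =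
         STN (spiro_V ?k cs) (spiro_E ?k cs) + 15 + 20 * cnt (spiro_V ?k cs) (spiro_E ?k cs) (\<lambda>A. hx cs ?k 0 \<in> A)"
    by (rule rec_STN) (use e in auto)
  have r2: "cnt (spiro_V (Suc ?k) cs) (spiro_E (Suc ?k) cs) (\<lambda>A. hx cs ?k (cs ! m) \<in> A) =
         phi (cs ! m) + cnt (spiro_V ?k cs) (spiro_E ?k cs) (\<lambda>A. hx cs ?k 0 \<in> A) * gam (cs ! m)"
    using rec_F[of ?k cs "cs ! m"] e d phi_val[OF d] gam_val[OF d] by simp
  have tk: "take (Suc m) cs = take m cs @ [cs ! m]" using m by (simp add: take_Suc_conv_app_nth)
  show ?case unfolding tk SF_snoc w using IH r1 r2
    by (auto simp: stepf_def prod_eq_iff mult.commute)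
qed

lemma STN_final:
  assumes cs: "set cs \<subseteq> {1, 2, 3}" and n: "n \<ge> 2" and len: "length cs = n - 2"
  shows "STN (spiro_V n cs) (spiro_E n cs) = fst (SF cs) + 15 + 20 * snd (SF cs)"
proof -
  obtain m where nm: "n = Suc (Suc m)" using n by (metis add_2_eq_Suc le_Suc_ex)
  then have mlen: "m = length cs" using len by simp
  have e: "0 < spiro_exit cs m" "spiro_exit cs m < 6" using exit_ok[OF cs, of m] mlen by auto
  have r: "STN (spiro_V (Suc (Suc m)) cs) (spiro_E (Suc (Suc m)) cs) =
         STN (spiro_V (Suc m) cs) (spiro_E (Suc m) cs) + 15 + 20 * cnt (spiro_V (Suc m) cs) (spiro_E (Suc m) cs) (\<lambda>A. hx cs (Suc m) 0 \<in> A)"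
    by (rule rec_STN) (use e in auto)
  have c: "(STN (spiro_V (Suc m) cs) (spiro_E (Suc m) cs), cnt (spiro_V (Suc m) cs) (spiro_E (Suc m) cs) (\<lambda>A. hx cs (Suc m) 0 \<in> A))
     = SF cs" using chain[OF cs, of m] mlen by simp
  show ?thesis unfolding nm r using c by (auto simp: prod_eq_iff)
qed

lemma STN_one: "STN (spiro_V 1 cs) (spiro_E 1 cs) = 36"
proof -
  have V1: "spiro_V (Suc 0) cs = hx cs 0 ` V6" by (simp add: spiro_V_Suc spiro_V_0)
  have E1: "spiro_E (Suc 0) cs = (`) (hx cs 0) ` E6" by (simp add: spiro_E_Suc spiro_E_0)
  show ?thesis unfolding One_nat_def STN_cnt V1 E1 hex_cnt using c6_true by simp
qed

definition LL :: "nat \<Rightarrow> nat list set" where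
  "LL m = {cs. length cs = m \<and> set cs \<subseteq> {1, 2, 3}}"

lemma finite_LL: "finite (LL m)"
proof -
  have "LL m = {xs. set xs \<subseteq> {1, 2, 3} \<and> length xs = m}" unfolding LL_def by auto
  then show ?thesis using finite_lists_length_eq[of "{1, 2, 3::nat}" m] by simp
qed

lemma LL_Suc: "LL (Suc m) = (\<lambda>(cs, d). cs @ [d]) ` (LL m \<times> {1, 2, 3})"
proof (intro equalityI subsetI)
  fix xs assume xs: "xs \<in> LL (Suc m)"
  then have ne: "xs \<noteq> []" unfolding LL_def by auto
  have "xs = butlast xs @ [last xs]" using ne by simp
  moreover have "butlast xs \<in> LL m" using xs unfolding LL_def by (auto dest: in_set_butlastD)
  moreover have "last xs \<in> {1, 2, 3}" using xs ne unfolding LL_def by (auto dest!: last_in_set)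
  ultimately show "xs \<in> (\<lambda>(cs, d). cs @ [d]) ` (LL m \<times> {1, 2, 3})" by (metis (no_types, lifting) SigmaI case_prod_conv image_eqI)
next
  fix xs assume "xs \<in> (\<lambda>(cs, d). cs @ [d]) ` (LL m \<times> {1, 2, 3})"
  then show "xs \<in> LL (Suc m)" unfolding LL_def by auto
qed

lemma sum_LL_Suc: "(\<Sum>cs\<in>LL (Suc m). g cs) = (\<Sum>cs\<in>LL m. \<Sum>d\<in>{1, 2, 3}. g (cs @ [d]))"
proof -
  have inj: "inj_on (\<lambda>(cs, d). cs @ [d]) (LL m \<times> {1, 2, 3::nat})" by (rule inj_onI) auto
  have "(\<Sum>cs\<in>LL (Suc m). g cs) = (\<Sum>p\<in>LL m \<times> {1, 2, 3}. g ((\<lambda>(cs, d). cs @ [d]) p))"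
    unfolding LL_Suc by (rule sum.reindex[OF inj, unfolded comp_def])
  also have "\<dots> = (\<Sum>cs\<in>LL m. \<Sum>d\<in>{1, 2, 3}. g (cs @ [d]))"
    by (subst sum.cartesian_product) (simp add: case_prod_beta)
  finally show ?thesis .
qed

lemma lin2: "(\<Sum>x\<in>X. w x * (c + q * s x)) = c * (\<Sum>x\<in>X. w x * 1) + q * (\<Sum>x\<in>X. w x * s x)"
  for w s :: "'a \<Rightarrow> real"
  by (simp add: sum.distrib sum_distrib_left algebra_simps)

lemma lin3: "(\<Sum>x\<in>X. w x * (a x + 15 + 20 * s x)) = (\<Sum>x\<in>X. w x * a x) + 15 * (\<Sum>x\<in>X. w x * 1) + 20 * (\<Sum>x\<in>X. w x * s x)"
  for w a s :: "'a \<Rightarrow> real"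
  by (simp add: sum.distrib sum_distrib_left sum_distrib_right algebra_simps)

lemma LL_0: "LL 0 = {[]}" unfolding LL_def by auto

context
  fixes p1 p2 :: real
begin

definition ww :: "nat list \<Rightarrow> real" where "ww cs = (\<Prod>c\<leftarrow>cs. choice_prob p1 p2 c)"

lemma ww_snoc: "ww (cs @ [d]) = ww cs * choice_prob p1 p2 d"
  unfolding ww_def by simp

definition EE :: "nat \<Rightarrow> (nat list \<Rightarrow> real) \<Rightarrow> real" where
  "EE m f = (\<Sum>cs\<in>LL m. ww cs * f cs)"

lemma sum_cp: "(\<Sum>d\<in>{1, 2, 3::nat}. choice_prob p1 p2 d) = 1"
  by (simp add: choice_prob_def)

lemma EE_Suc: "EE (Suc m) f = (\<Sum>cs\<in>LL m. ww cs * (\<Sum>d\<in>{1, 2, 3}. choice_prob p1 p2 d * f (cs @ [d])))"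
  unfolding EE_def sum_LL_Suc ww_snoc
  by (simp add: sum_distrib_left mult.assoc distrib_left)

lemma EE_one: "EE m (\<lambda>_. 1) = 1"
proof (induction m)
  case 0 then show ?case unfolding EE_def LL_0 ww_def by simp
next
  case (Suc m)
  have "EE (Suc m) (\<lambda>_. 1) = (\<Sum>cs\<in>LL m. ww cs * 1)"
    unfolding EE_Suc using sum_cp by simp
  then show ?case using Suc unfolding EE_def by simp
qed

lemma EE_b: "EE (Suc m) (\<lambda>cs. real (snd (SF cs))) = (9 - 4 * p1 - p2) + (12 + 4 * p1 + p2) * EE m (\<lambda>cs. real (snd (SF cs)))"
proof -
  have inner: "(\<Sum>d\<in>{1, 2, 3}. choice_prob p1 p2 d * real (snd (SF (cs @ [d]))))
      = (9 - 4 * p1 - p2) + (12 + 4 * p1 + p2) * real (snd (SF cs))" for cs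
    by (simp add: SF_snoc stepf_def phi_def gam_def choice_prob_def algebra_simps)
  have "EE (Suc m) (\<lambda>cs. real (snd (SF cs))) = (\<Sum>cs\<in>LL m. ww cs * ((9 - 4 * p1 - p2) + (12 + 4 * p1 + p2) * real (snd (SF cs))))"
    unfolding EE_Suc inner by simp
  also have "\<dots> = (9 - 4 * p1 - p2) * EE m (\<lambda>_. 1) + (12 + 4 * p1 + p2) * EE m (\<lambda>cs. real (snd (SF cs)))"
    unfolding EE_def by (rule lin2)
  finally show ?thesis using EE_one by simp
qed

lemma EE_a: "EE (Suc m) (\<lambda>cs. real (fst (SF cs))) = EE m (\<lambda>cs. real (fst (SF cs))) + 15 + 20 * EE m (\<lambda>cs. real (snd (SF cs)))"
proof -
  have inner: "(\<Sum>d\<in>{1, 2, 3}. choice_prob p1 p2 d * real (fst (SF (cs @ [d]))))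
      = real (fst (SF cs)) + 15 + 20 * real (snd (SF cs))" for cs
    by (simp add: SF_snoc stepf_def choice_prob_def algebra_simps)
  have "EE (Suc m) (\<lambda>cs. real (fst (SF cs))) = (\<Sum>cs\<in>LL m. ww cs * (real (fst (SF cs)) + 15 + 20 * real (snd (SF cs))))"
    unfolding EE_Suc inner by simp
  also have "\<dots> = EE m (\<lambda>cs. real (fst (SF cs))) + 15 * EE m (\<lambda>_. 1) + 20 * EE m (\<lambda>cs. real (snd (SF cs)))"
    unfolding EE_def by (rule lin3)
  finally show ?thesis using EE_one by simp
qed

end

definition TT :: "real \<Rightarrow> real \<Rightarrow> nat \<Rightarrow> real" where
  "TT p1 p2 n = 400 / (11 + 4 * p1 + p2)^2 * (12 + 4 * p1 + p2) ^ n
    + (140 * p1 + 35 * p2 - 15) / (11 + 4 * p1 + p2) * real n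
    - 400 / (11 + 4 * p1 + p2)^2 + 1"

lemma EE_0: "EE p1 p2 0 f = f []"
  unfolding EE_def LL_0 ww_def by simp

lemma rec_closed:
  fixes \<alpha> :: real and a b :: "nat \<Rightarrow> real"
  assumes a0: "\<alpha> \<noteq> 0" and b0: "b 0 = 21" and aa0: "a 0 = 36"
    and bS: "\<And>m. b (Suc m) = (20 - \<alpha>) + (\<alpha> + 1) * b m"
    and aS: "\<And>m. a (Suc m) = a m + 15 + 20 * b m"
  shows "b m = 20 * (\<alpha> + 1) ^ (m + 1) / \<alpha> - (20 - \<alpha>) / \<alpha>
    \<and> a m = 400 / \<alpha>^2 * (\<alpha> + 1) ^ (m + 1) + (35 * \<alpha> - 400) / \<alpha> * real (m + 1) - 400 / \<alpha>^2 + 1"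
proof (induction m)
  case 0
  have "b 0 = 20 * (\<alpha> + 1) ^ (0 + 1) / \<alpha> - (20 - \<alpha>) / \<alpha>" using a0 b0 by (simp add: field_simps)
  moreover have "a 0 = 400 / \<alpha>^2 * (\<alpha> + 1) ^ (0 + 1) + (35 * \<alpha> - 400) / \<alpha> * real (0 + 1) - 400 / \<alpha>^2 + 1"
    using a0 aa0 by (simp add: field_simps power2_eq_square)
  ultimately show ?case by simp
next
  case (Suc m)
  define x where "x = (\<alpha> + 1) ^ (m + 1)"
  have qx: "(\<alpha> + 1) ^ (Suc m + 1) = (\<alpha> + 1) * x" unfolding x_def by simp
  define r where "r = real (m + 1)"
  have r: "real (Suc m + 1) = r + 1" unfolding r_def by simp
  have b: "b m = 20 * x / \<alpha> - (20 - \<alpha>) / \<alpha>" using Suc x_def by simp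
  have a: "a m = 400 / \<alpha>^2 * x + (35 * \<alpha> - 400) / \<alpha> * r - 400 / \<alpha>^2 + 1" using Suc x_def r_def by simp
  have "b (Suc m) = 20 * ((\<alpha> + 1) * x) / \<alpha> - (20 - \<alpha>) / \<alpha>"
    unfolding bS b using a0 by (simp add: field_simps)
  moreover have "a (Suc m) = 400 / \<alpha>^2 * ((\<alpha> + 1) * x) + (35 * \<alpha> - 400) / \<alpha> * (r + 1) - 400 / \<alpha>^2 + 1"
    unfolding aS a b using a0 by (simp add: field_simps power2_eq_square)
  ultimately show ?case unfolding qx r by simp
qed

lemma TT_alt: "TT p1 p2 n = 400 / (11 + 4 * p1 + p2)^2 * ((11 + 4 * p1 + p2) + 1) ^ n
    + (35 * (11 + 4 * p1 + p2) - 400) / (11 + 4 * p1 + p2) * real n - 400 / (11 + 4 * p1 + p2)^2 + 1"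
proof -
  have q: "12 + 4 * p1 + p2 = (11 + 4 * p1 + p2) + 1" and c: "140 * p1 + 35 * p2 - 15 = 35 * (11 + 4 * p1 + p2) - 400"
    by simp_all
  show ?thesis unfolding TT_def q c ..
qed

lemma closed:
  fixes p1 p2 :: real
  assumes al: "11 + 4 * p1 + p2 > 0"
  shows "EE p1 p2 m (\<lambda>cs. real (fst (SF cs))) = TT p1 p2 (m + 1)"
proof -
  define \<alpha> where "\<alpha> = 11 + 4 * p1 + p2"
  have a0: "\<alpha> \<noteq> 0" using al \<alpha>_def by simp
  have bS: "EE p1 p2 (Suc k) (\<lambda>cs. real (snd (SF cs))) = (20 - \<alpha>) + (\<alpha> + 1) * EE p1 p2 k (\<lambda>cs. real (snd (SF cs)))" for k
    unfolding EE_b \<alpha>_def by (simp add: algebra_simps)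
  have b0: "EE p1 p2 0 (\<lambda>cs. real (snd (SF cs))) = 21" and aa0: "EE p1 p2 0 (\<lambda>cs. real (fst (SF cs))) = 36"
    unfolding EE_0 by (simp_all add: SF_def)
  from rec_closed[OF a0 b0 aa0 bS EE_a]
  have "EE p1 p2 m (\<lambda>cs. real (fst (SF cs))) = 400 / \<alpha>^2 * (\<alpha> + 1) ^ (m + 1) + (35 * \<alpha> - 400) / \<alpha> * real (m + 1) - 400 / \<alpha>^2 + 1"
    by blast
  then show ?thesis unfolding TT_alt \<alpha>_def .
qed

theorem theorem5:
  fixes p1 p2 :: real and n :: nat
  assumes "p1 \<ge> 0" and "p2 \<ge> 0" and "p1 + p2 \<le> 1" and "n \<ge> 1"
  shows "expected_STN_RSC n p1 p2 =
    400 / (11 + 4 * p1 + p2)^2 * (12 + 4 * p1 + p2) ^ n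
    + (140 * p1 + 35 * p2 - 15) / (11 + 4 * p1 + p2) * real n
    - 400 / (11 + 4 * p1 + p2)^2 + 1"
proof -
  have al: "11 + 4 * p1 + p2 > 0" using assms by linarith
  have ex: "expected_STN_RSC n p1 p2 = EE p1 p2 (n - 2) (\<lambda>cs. real (STN (spiro_V n cs) (spiro_E n cs)))"
    unfolding expected_STN_RSC_def EE_def LL_def ww_def by simp
  have main: "EE p1 p2 (n - 2) (\<lambda>cs. real (STN (spiro_V n cs) (spiro_E n cs))) = TT p1 p2 n"
  proof (cases "n = 1")
    case True
    have "TT p1 p2 1 = 36" using closed[OF al, of 0] by (simp add: EE_0 SF_def)
    moreover have "STN (spiro_V 1 []) (spiro_E 1 []) = 36" by (rule STN_one)
    ultimately show ?thesis using True by (simp add: EE_0)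
  next
    case False
    then have n2: "n \<ge> 2" using assms(4) by simp
    define m where "m = n - 2"
    have nm: "n = Suc m + 1" using n2 m_def by simp
    have "EE p1 p2 m (\<lambda>cs. real (STN (spiro_V n cs) (spiro_E n cs)))
        = EE p1 p2 m (\<lambda>cs. real (fst (SF cs)) + 15 + 20 * real (snd (SF cs)))"
      unfolding EE_def
    proof (rule sum.cong)
      fix cs assume "cs \<in> LL m"
      then have cs: "set cs \<subseteq> {1, 2, 3}" "length cs = n - 2" unfolding LL_def m_def by auto
      show "ww p1 p2 cs * real (STN (spiro_V n cs) (spiro_E n cs)) = ww p1 p2 cs * (real (fst (SF cs)) + 15 + 20 * real (snd (SF cs)))"
        using STN_final[OF cs(1) n2 cs(2)] by simp
    qed simp
    also have "\<dots> = EE p1 p2 m (\<lambda>cs. real (fst (SF cs))) + 15 * EE p1 p2 m (\<lambda>_. 1) + 20 * EE p1 p2 m (\<lambda>cs. real (snd (SF cs)))"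
      unfolding EE_def by (rule lin3)
    also have "\<dots> = EE p1 p2 (Suc m) (\<lambda>cs. real (fst (SF cs)))" using EE_a EE_one by simp
    also have "\<dots> = TT p1 p2 n" using closed[OF al, of "Suc m"] nm by simp
    finally show ?thesis unfolding m_def .
  qed
  show ?thesis unfolding ex main TT_def ..
qed

end
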